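(* Let $n\ge 3$ and let $B_n(r,q)$ be the generic BMW algebra over $\mathbb{K}=\mathbb{Q}(r,q)$ (defined in the context). For all integers $k,h\ge 0$ and all $1\le i\le n-2$, $$Y_i(k)\,Y_{i+1}(k+h)\,Y_i(h)=Y_{i+1}(h)\,Y_i(k+h)\,Y_{i+1}(k),$$ and for all $k,h\ge 0$ and all $1\le i,j\le n-1$ with $|i-j|>1$, $$Y_i(k)Y_j(h)=Y_j(h)Y_i(k).$$
   Context: Let $r,q$ be indeterminates, $\mathbb{K}=\mathbb{Q}(r,q)$, and $x=1+\frac{r-r^{-1}}{q-q^{-1}}$. The generic BMW algebra $B_n(r,q)$ is the unital associative $\mathbb{K}$-algebra generated by $T_i^{\pm1},E_i$ ($1\le i\le n-1$) subject to: $T_i-T_i^{-1}=(q-q^{-1})(1-E_i)$; $E_i^2=xE_i$; $T_iT_{i+1}T_i=T_{i+1}T_iT_{i+1}$ ($1\le i\le n-2$); $T_iT_j=T_jT_i$ ($|i-j|>1$); $E_iE_{i+1}E_i=E_i$, $E_{i+1}E_iE_{i+1}=E_{i+1}$; $T_iT_{i+1}E_i=E_{i+1}E_i$, $T_{i+1}T_iE_{i+1}=E_iE_{i+1}$; $E_iT_i=T_iE_i=r^{-1}E_i$; $E_iT_{i+1}E_i=rE_i$, $E_{i+1}T_iE_{i+1}=rE_{i+1}$ (with $T_i^{\pm1}$ mutually inverse). For an integer $k\ge0$ let $[k]=\frac{q^k-q^{-k}}{q-q^{-1}}$ (so $[0]=0$), and for $1\le i\le n-1$ define $$Y_i(k)=\frac{-1}{[k+1]}\Big([k]T_i-q^k+\frac{q^k-q^{-k}}{1+rq^{-2k+1}}E_i\Big)\in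 B_n(r,q).$$ *)

theory Defs
  imports "HOL-Computational_Algebra.Polynomial" "HOL-Computational_Algebra.Fraction_Field"
begin

text \<open>The base field K = Q(r,q): fractions of the bivariate polynomial ring Q[q][r]
  (outer variable r, inner variable q).\<close>
type_synonym K = "rat poly poly fract"

definition rK :: K where "rK = Fract [:0, 1:] 1"
definition qK :: K where "qK = Fract [:[:0, 1:]:] 1"

definition xK :: K where
  "xK = 1 + (rK - inverse rK) / (qK - inverse qK)"

definition qint :: "nat \<Rightarrow> K" where
  "qint k = (qK ^ k - inverse (qK ^ k)) / (qK - inverse qK)"

text \<open>A K-algebra is a ring A together with a unital ring homomorphism K \<rightarrow> A
  with central image (scalar multiplication c\<cdot>a = \<phi> c * a).\<close>
definition K_algebra_map :: "(K \<Rightarrow> 'a::ring_1) \<Rightarrow> bool" where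
  "K_algebra_map \<phi> \<longleftrightarrow> \<phi> 1 = 1 \<and> (\<forall>a b. \<phi> (a + b) = \<phi> a + \<phi> b)
     \<and> (\<forall>a b. \<phi> (a * b) = \<phi> a * \<phi> b) \<and> (\<forall>a y. \<phi> a * y = y * \<phi> a)"

definition bmw_rels :: "nat \<Rightarrow> (K \<Rightarrow> 'a::ring_1) \<Rightarrow> (nat \<Rightarrow> 'a) \<Rightarrow> (nat \<Rightarrow> 'a) \<Rightarrow> (nat \<Rightarrow> 'a) \<Rightarrow> bool" where
  "bmw_rels n \<phi> T Ti E \<longleftrightarrow>
     (\<forall>i. 1 \<le> i \<and> i \<le> n - 1 \<longrightarrow>
        T i * Ti i = 1 \<and> Ti i * T i = 1
      \<and> T i - Ti i = \<phi> (qK - inverse qK) * (1 - E i)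
      \<and> E i * E i = \<phi> xK * E i
      \<and> E i * T i = \<phi> (inverse rK) * E i
      \<and> T i * E i = \<phi> (inverse rK) * E i)
   \<and> (\<forall>i. 1 \<le> i \<and> i \<le> n - 2 \<longrightarrow>
        T i * T (i+1) * T i = T (i+1) * T i * T (i+1)
      \<and> E i * E (i+1) * E i = E i
      \<and> E (i+1) * E i * E (i+1) = E (i+1)
      \<and> T i * T (i+1) * E i = E (i+1) * E i
      \<and> T (i+1) * T i * E (i+1) = E i * E (i+1)
      \<and> E i * T (i+1) * E i = \<phi> rK * E i
      \<and> E (i+1) * T i * E (i+1) = \<phi> rK * E (i+1))
   \<and> (\<forall>i j. 1 \<le> i \<and> i \<le> n - 1 \<and> 1 \<le> j \<and> j \<le> n - 1 \<and> (i + 1 < j \<or> j + 1 < i) \<longrightarrow>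
        T i * T j = T j * T i)"

definition bmwY :: "(K \<Rightarrow> 'a::ring_1) \<Rightarrow> (nat \<Rightarrow> 'a) \<Rightarrow> (nat \<Rightarrow> 'a) \<Rightarrow> nat \<Rightarrow> nat \<Rightarrow> 'a" where
  "bmwY \<phi> T E i k =
     \<phi> (- 1 / qint (k + 1)) *
       (\<phi> (qint k) * T i - \<phi> (qK ^ k)
        + \<phi> ((qK ^ k - inverse (qK ^ k)) / (1 + rK * qK * inverse (qK ^ (2 * k)))) * E i)"

end

theory Submission
  imports Defs
begin

definition embK :: "rat poly poly \<Rightarrow> K" where "embK p = Fract p 1"

lemma embK_add: "embK (a + b) = embK a + embK b" by (simp add: embK_def)
lemma embK_mult: "embK (a * b) = embK a * embK b" by (simp add: embK_def)
lemma embK_pow: "embK (a ^ n) = embK a ^ n"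
proof (induction n)
  case 0 then show ?case by (simp add: embK_def One_fract_def)
next
  case (Suc n) then show ?case by (simp only: power_Suc embK_mult)
qed
lemma embK_eq: "embK a = embK b \<longleftrightarrow> a = b" by (simp add: embK_def eq_fract)
lemma embK_0: "embK 0 = 0" by (simp add: embK_def Zero_fract_def)
lemma embK_1: "embK 1 = 1" by (simp add: embK_def One_fract_def)

lemma qK_emb: "qK = embK [:[:0, 1:]:]" by (simp add: qK_def embK_def)
lemma rK_emb: "rK = embK [:0, 1:]" by (simp add: rK_def embK_def)

lemma qK_nz: "qK \<noteq> 0"
  by (simp add: qK_emb embK_0[symmetric] embK_eq del: pCons_0_0)
lemma rK_nz: "rK \<noteq> 0"
  by (simp add: rK_emb embK_0[symmetric] embK_eq del: pCons_0_0)

lemma monom_pow: "[:(0::rat), 1:] ^ m = monom 1 m"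
  by (induction m) (simp_all add: monom_Suc)

lemma qK_pow_ne1: assumes "m > 0" shows "qK ^ m \<noteq> 1"
proof
  assume "qK ^ m = 1"
  hence "embK ([:[:0, 1:]:] ^ m) = embK 1" by (simp add: qK_emb embK_pow embK_1)
  hence "[:[:(0::rat), 1:]:] ^ m = 1" by (simp add: embK_eq)
  hence "[:[:(0::rat), 1:] ^ m:] = [:1:]" by (simp add: poly_const_pow)
  hence "monom (1::rat) m = 1" by (simp add: monom_pow)
  hence "degree (monom (1::rat) m) = 0" by simp
  with assms show False by (simp add: degree_monom_eq)
qed

lemma U_rq_nz: "qK ^ m + rK * qK \<noteq> 0"
proof
  assume "qK ^ m + rK * qK = 0"
  hence "embK ([:[:0, 1:]:] ^ m + [:0, 1:] * [:[:0, 1:]:]) = embK 0"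
    by (simp only: qK_emb rK_emb embK_pow embK_add embK_mult embK_0)
  hence "[:[:(0::rat), 1:]:] ^ m + [:0, 1:] * [:[:0, 1:]:] = 0" by (simp add: embK_eq)
  hence "coeff ([:[:(0::rat), 1:]:] ^ m + [:0, 1:] * [:[:0, 1:]:]) 1 = 0" by simp
  moreover have "coeff ([:[:(0::rat), 1:]:] ^ m) 1 = 0"
    by (simp add: poly_const_pow)
  ultimately show False by simp
qed

definition zK :: K where "zK = qK - inverse qK"
definition lK :: K where "lK = inverse rK"


lemma zK_nz: "zK \<noteq> 0"
proof
  assume "zK = 0"
  hence "qK = inverse qK" by (simp add: zK_def)
  hence "qK * qK = 1" using qK_nz by (metis right_inverse)
  hence "qK ^ 2 = 1" by (simp add: power2_eq_square)
  with qK_pow_ne1[of 2] show False by simp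
qed
lemma lK_nz: "lK \<noteq> 0" using rK_nz by (simp add: lK_def)
lemma rK_lK: "rK * lK = 1" using rK_nz by (simp add: lK_def)

locale bmw3 =
  fixes \<phi> :: "K \<Rightarrow> 'a::ring_1" and a ai b bi e f :: 'a
  assumes hom: "K_algebra_map \<phi>"
    and ainv: "a * ai = 1" and binv: "b * bi = 1"
    and askein: "a - ai = \<phi> zK * (1 - e)" and bskein: "b - bi = \<phi> zK * (1 - f)"
    and ee0: "e * e = \<phi> xK * e" and ff0: "f * f = \<phi> xK * f"
    and ea0: "e * a = \<phi> lK * e" and ae0: "a * e = \<phi> lK * e"
    and fb0: "f * b = \<phi> lK * f" and bf0: "b * f = \<phi> lK * f"
    and braid: "a * b * a = b * a * b"
    and efe0: "e * f * e = e" and fef0: "f * e * f = f"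
    and abe0: "a * b * e = f * e" and baf0: "b * a * f = e * f"
    and ebe0: "e * b * e = \<phi> rK * e" and faf0: "f * a * f = \<phi> rK * f"
begin

lemma sc_add: "\<phi> (c + d) = \<phi> c + \<phi> d" using hom unfolding K_algebra_map_def by blast
lemma sc_mult: "\<phi> (c * d) = \<phi> c * \<phi> d" using hom unfolding K_algebra_map_def by blast
lemma sc_one: "\<phi> 1 = 1" using hom unfolding K_algebra_map_def by blast
lemma sc_central: "\<phi> c * y = y * \<phi> c" using hom unfolding K_algebra_map_def by blast
lemma sc_zero: "\<phi> 0 = 0"
proof -
  have "\<phi> 0 = \<phi> 0 + \<phi> 0" using sc_add[of 0 0] by (simp only: add_0_left)
  thus ?thesis by (rule add_cancel_right_right[THEN iffD1])
qed
lemma sc_minus: "\<phi> (- c) = - \<phi> c"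
proof -
  have "0 = \<phi> c + \<phi> (- c)" using sc_add[of c "- c"] by (simp only: right_minus sc_zero)
  thus ?thesis by (simp only: add_eq_0_iff eq_commute[of 0])
qed
lemma sc_diff: "\<phi> (c - d) = \<phi> c - \<phi> d"
  using sc_add[of c "- d"] by (simp add: sc_minus)

lemma sc_sc: "\<phi> c * (\<phi> d * y) = \<phi> (c * d) * y" by (simp only: sc_mult mult.assoc)
lemma sc_sc2: "\<phi> c * \<phi> d = \<phi> (c * d)" by (rule sc_mult[symmetric])
lemma a_sc2: "a * \<phi> c = \<phi> c * a" by (rule sc_central[symmetric])
lemma b_sc2: "b * \<phi> c = \<phi> c * b" by (rule sc_central[symmetric])
lemma e_sc2: "e * \<phi> c = \<phi> c * e" by (rule sc_central[symmetric])
lemma f_sc2: "f * \<phi> c = \<phi> c * f" by (rule sc_central[symmetric])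
lemma a_sc: "a * (\<phi> c * y) = \<phi> c * (a * y)" by (simp only: mult.assoc[symmetric] a_sc2)
lemma b_sc: "b * (\<phi> c * y) = \<phi> c * (b * y)" by (simp only: mult.assoc[symmetric] b_sc2)
lemma e_sc: "e * (\<phi> c * y) = \<phi> c * (e * y)" by (simp only: mult.assoc[symmetric] e_sc2)
lemma f_sc: "f * (\<phi> c * y) = \<phi> c * (f * y)" by (simp only: mult.assoc[symmetric] f_sc2)

lemmas nrm = mult.assoc distrib_left distrib_right left_diff_distrib right_diff_distrib
  mult_minus_left mult_minus_right mult_1_left mult_1_right mult_zero_left mult_zero_right
  sc_sc sc_sc2 a_sc b_sc e_sc f_sc a_sc2 b_sc2 e_sc2 f_sc2
  add_0_left add_0_right diff_0 diff_0_right minus_minus minus_zero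

lemma sc_cancel: assumes "c \<noteq> 0" "\<phi> c * x = \<phi> c * y" shows "x = y"
proof -
  have "\<phi> (inverse c) * (\<phi> c * x) = \<phi> (inverse c) * (\<phi> c * y)" using assms(2) by (rule arg_cong)
  hence "\<phi> (inverse c * c) * x = \<phi> (inverse c * c) * y" by (simp only: sc_sc)
  hence "\<phi> 1 * x = \<phi> 1 * y" by (simp only: left_inverse[OF assms(1)])
  thus ?thesis by (simp only: sc_one mult_1_left)
qed


lemma aa: "a * a = 1 + \<phi> (zK) * (a) - \<phi> (zK * lK) * (e)"
proof -
  have "ai = a - \<phi> zK * (1 - e)" using askein by (simp add: algebra_simps)
  hence "a * (a - \<phi> zK * (1 - e)) = 1" using ainv by simp
  hence h2: "a * a - a * (\<phi> zK * (1 - e)) = 1" by (simp only: right_diff_distrib)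
  have "a * a - 1 = a * a - (a * a - a * (\<phi> zK * (1 - e)))" by (simp only: h2)
  hence "a * a - 1 = a * (\<phi> zK * (1 - e))" by simp
  also have "\<dots> = \<phi> (zK) * (a) - \<phi> (zK * lK) * (e)"
    by (simp only: a_sc a_sc2 right_diff_distrib mult_1_right ae0 sc_sc)
  finally show ?thesis by (simp add: algebra_simps)
qed
lemma bb: "b * b = 1 + \<phi> (zK) * (b) - \<phi> (zK * lK) * (f)"
proof -
  have "bi = b - \<phi> zK * (1 - f)" using bskein by (simp add: algebra_simps)
  hence "b * (b - \<phi> zK * (1 - f)) = 1" using binv by simp
  hence h2: "b * b - b * (\<phi> zK * (1 - f)) = 1" by (simp only: right_diff_distrib)
  have "b * b - 1 = b * b - (b * b - b * (\<phi> zK * (1 - f)))" by (simp only: h2)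
  hence "b * b - 1 = b * (\<phi> zK * (1 - f))" by simp
  also have "\<dots> = \<phi> (zK) * (b) - \<phi> (zK * lK) * (f)"
    by (simp only: b_sc b_sc2 right_diff_distrib mult_1_right bf0 sc_sc)
  finally show ?thesis by (simp add: algebra_simps)
qed
lemma ee: "e * e = \<phi> (xK) * (e)" by (rule ee0)
lemma ff: "f * f = \<phi> (xK) * (f)" by (rule ff0)
lemma ea: "e * a = \<phi> (lK) * (e)" by (rule ea0)
lemma ae: "a * e = \<phi> (lK) * (e)" by (rule ae0)
lemma fb: "f * b = \<phi> (lK) * (f)" by (rule fb0)
lemma bf: "b * f = \<phi> (lK) * (f)" by (rule bf0)
lemma bab: "b * (a * b) = a * (b * a)" using braid by (simp add: mult.assoc)
lemma efe: "e * (f * e) = e" using efe0 by (simp add: mult.assoc)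
lemma fef: "f * (e * f) = f" using fef0 by (simp add: mult.assoc)
lemma abe: "a * (b * e) = f * e" using abe0 by (simp add: mult.assoc)
lemma baf: "b * (a * f) = e * f" using baf0 by (simp add: mult.assoc)
lemma ebe: "e * (b * e) = \<phi> (rK) * (e)" using ebe0 by (simp add: mult.assoc)
lemma faf: "f * (a * f) = \<phi> (rK) * (f)" using faf0 by (simp add: mult.assoc)

lemma zlr: "\<phi> (zK * lK) * (\<phi> rK * y) = \<phi> zK * y"
  by (simp only: sc_sc mult.assoc[of zK] mult.commute[of lK] rK_lK mult_1_right)

lemma afe: "a * (f * e) = b * e - \<phi> (zK) * (e) + \<phi> (zK) * (f * e)"
proof -
  have "a * (f * e) = (a * a) * (b * e)" by (simp only: abe[symmetric] mult.assoc)
  also have "\<dots> = b * e + \<phi> zK * (a * (b * e)) - \<phi> (zK * lK) * (e * (b * e))"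
    by (simp only: aa distrib_right left_diff_distrib mult_1_left mult.assoc)
  also have "\<dots> = b * e + \<phi> zK * (f * e) - \<phi> zK * e"
    by (simp only: abe ebe zlr)
  finally show ?thesis by (simp add: algebra_simps)
qed

lemma bef: "b * (e * f) = a * f - \<phi> (zK) * (f) + \<phi> (zK) * (e * f)"
proof -
  have "b * (e * f) = (b * b) * (a * f)" by (simp only: baf[symmetric] mult.assoc)
  also have "\<dots> = a * f + \<phi> zK * (b * (a * f)) - \<phi> (zK * lK) * (f * (a * f))"
    by (simp only: bb distrib_right left_diff_distrib mult_1_left mult.assoc)
  also have "\<dots> = a * f + \<phi> zK * (e * f) - \<phi> zK * f"
    by (simp only: baf faf zlr)
  finally show ?thesis by (simp add: algebra_simps)
qed

lemma fab: "f * (a * b) = f * e"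
proof -
  have h0: "b * (b * (a * b)) = a * b + \<phi> zK * (b * (a * b)) - \<phi> (zK * lK) * (f * (a * b))"
    by (simp only: bb distrib_right left_diff_distrib mult_1_left mult.assoc[symmetric])
  have h1: "\<phi> (zK * lK) * (f * (a * b)) = a * b + \<phi> zK * (a * (b * a)) - b * (a * (b * a))"
    using h0 unfolding bab by (simp add: algebra_simps)
  have "b * (a * (b * a)) = (b * (a * b)) * a" by (simp only: mult.assoc)
  also have "\<dots> = a * (b * (a * a))" by (simp only: bab mult.assoc)
  also have "\<dots> = a * b + \<phi> zK * (a * (b * a)) - \<phi> (zK * lK) * (a * (b * e))"
    by (simp only: aa distrib_left right_diff_distrib mult_1_right a_sc b_sc)
  finally have h2: "b * (a * (b * a)) = a * b + \<phi> zK * (a * (b * a)) - \<phi> (zK * lK) * (f * e)"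
    by (simp only: abe)
  have "\<phi> (zK * lK) * (f * (a * b)) = \<phi> (zK * lK) * (f * e)"
    using h1 unfolding h2 by (simp add: algebra_simps)
  thus ?thesis by (rule sc_cancel[rotated]) (simp add: zK_nz lK_nz)
qed

lemma eba: "e * (b * a) = e * f"
proof -
  have h0: "(b * (a * b)) * b = b * a + \<phi> zK * (b * (a * b)) - \<phi> (zK * lK) * (b * (a * f))"
    by (simp only: mult.assoc bb distrib_left right_diff_distrib mult_1_right a_sc b_sc)
  have h1: "\<phi> (zK * lK) * (e * f) = b * a + \<phi> zK * (a * (b * a)) - (a * (b * a)) * b"
    using h0 unfolding bab baf by (simp add: algebra_simps)
  have "(a * (b * a)) * b = a * (b * (a * b))" by (simp only: mult.assoc)
  also have "\<dots> = (a * a) * (b * a)" by (simp only: bab mult.assoc)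
  also have "\<dots> = b * a + \<phi> zK * (a * (b * a)) - \<phi> (zK * lK) * (e * (b * a))"
    by (simp only: aa distrib_right left_diff_distrib mult_1_left mult.assoc)
  finally have h2: "(a * (b * a)) * b = b * a + \<phi> zK * (a * (b * a)) - \<phi> (zK * lK) * (e * (b * a))" .
  have "\<phi> (zK * lK) * (e * (b * a)) = \<phi> (zK * lK) * (e * f)"
    using h1 unfolding h2 by (simp add: algebra_simps)
  thus ?thesis by (rule sc_cancel[rotated]) (simp add: zK_nz lK_nz)
qed

lemma feb: "f * (e * b) = f * a + \<phi> (zK) * (f * e) - \<phi> (zK) * (f)"
proof -
  have "f * (e * b) = (f * (a * b)) * b" by (simp only: fab mult.assoc)
  also have "\<dots> = f * (a * (b * b))" by (simp only: mult.assoc)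
  also have "\<dots> = f * a + \<phi> zK * (f * (a * b)) - \<phi> (zK * lK) * (f * (a * f))"
    by (simp only: bb distrib_left right_diff_distrib mult_1_right a_sc f_sc)
  also have "\<dots> = f * a + \<phi> zK * (f * e) - \<phi> zK * f"
    by (simp only: fab faf zlr)
  finally show ?thesis .
qed

lemma efa: "e * (f * a) = e * b + \<phi> (zK) * (e * f) - \<phi> (zK) * (e)"
proof -
  have "e * (f * a) = (e * (b * a)) * a" by (simp only: eba mult.assoc)
  also have "\<dots> = e * (b * (a * a))" by (simp only: mult.assoc)
  also have "\<dots> = e * b + \<phi> zK * (e * (b * a)) - \<phi> (zK * lK) * (e * (b * e))"
    by (simp only: aa distrib_left right_diff_distrib mult_1_right b_sc e_sc)
  also have "\<dots> = e * b + \<phi> zK * (e * f) - \<phi> zK * e"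
    by (simp only: eba ebe zlr)
  finally show ?thesis .
qed

lemma beb: "b * (e * b) = a * (f * a) + \<phi> (zK) * (e * b) - \<phi> (zK) * (a * f) - \<phi> (zK) * (f * a) + \<phi> (zK * zK) * (f) + \<phi> (zK) * (b * e) - \<phi> (zK * zK) * (e)"
proof -
  have h1: "(a * (f * e)) * b = b * (e * b) - \<phi> zK * (e * b) + \<phi> zK * (f * a) + \<phi> (zK * zK) * (f * e) - \<phi> (zK * zK) * f"
    by (simp only: afe feb distrib_right left_diff_distrib mult.assoc distrib_left right_diff_distrib
        f_sc sc_sc) (simp add: algebra_simps)
  have h2: "a * (f * (e * b)) = a * (f * a) + \<phi> zK * (b * e) - \<phi> (zK * zK) * e + \<phi> (zK * zK) * (f * e) - \<phi> zK * (a * f)"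
    by (simp only: feb afe distrib_left right_diff_distrib a_sc sc_sc) (simp add: algebra_simps)
  have "(a * (f * e)) * b = a * (f * (e * b))" by (simp only: mult.assoc)
  with h1 h2 show ?thesis by (simp add: algebra_simps)
qed

end

definition alphaK :: "K \<Rightarrow> K" where "alphaK U = - ((qK^2 - 1) * U * (U + rK * qK))"
definition betaK :: "K \<Rightarrow> K" where "betaK U = qK * (U - 1) * (U + rK * qK)"
definition gammaK :: "K \<Rightarrow> K" where "gammaK U = (qK^2 - 1) * U * (U - 1)"

lemma rels: "zK * qK = qK^2 - 1" "lK * rK = 1" "xK * zK = zK + rK - lK"
proof -
  show "zK * qK = qK^2 - 1" using qK_nz by (simp add: zK_def algebra_simps power2_eq_square)
  show "lK * rK = 1" using rK_nz by (simp add: lK_def)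
  have "xK = 1 + (rK - lK) / zK" by (simp add: xK_def zK_def lK_def)
  thus "xK * zK = zK + rK - lK" using zK_nz by (simp add: field_simps)
qed


context bmw3 begin
lemma aa_t: "a * (a * X) = X + \<phi> (zK) * (a * X) - \<phi> (zK * lK) * (e * X)"
proof -
  have "a * (a * X) = (a * a) * X" by (simp only: mult.assoc)
  also have "\<dots> = X + \<phi> (zK) * (a * X) - \<phi> (zK * lK) * (e * X)" by (simp only: aa distrib_right left_diff_distrib mult_1_left mult.assoc)
  finally show ?thesis .
qed

lemma bb_t: "b * (b * X) = X + \<phi> (zK) * (b * X) - \<phi> (zK * lK) * (f * X)"
proof -
  have "b * (b * X) = (b * b) * X" by (simp only: mult.assoc)
  also have "\<dots> = X + \<phi> (zK) * (b * X) - \<phi> (zK * lK) * (f * X)" by (simp only: bb distrib_right left_diff_distrib mult_1_left mult.assoc)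
  finally show ?thesis .
qed

lemma ee_t: "e * (e * X) = \<phi> (xK) * (e * X)"
proof -
  have "e * (e * X) = (e * e) * X" by (simp only: mult.assoc)
  also have "\<dots> = \<phi> (xK) * (e * X)" by (simp only: ee distrib_right left_diff_distrib mult_1_left mult.assoc)
  finally show ?thesis .
qed

lemma ff_t: "f * (f * X) = \<phi> (xK) * (f * X)"
proof -
  have "f * (f * X) = (f * f) * X" by (simp only: mult.assoc)
  also have "\<dots> = \<phi> (xK) * (f * X)" by (simp only: ff distrib_right left_diff_distrib mult_1_left mult.assoc)
  finally show ?thesis .
qed

lemma ea_t: "e * (a * X) = \<phi> (lK) * (e * X)"
proof -
  have "e * (a * X) = (e * a) * X" by (simp only: mult.assoc)
  also have "\<dots> = \<phi> (lK) * (e * X)" by (simp only: ea distrib_right left_diff_distrib mult_1_left mult.assoc)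
  finally show ?thesis .
qed

lemma ae_t: "a * (e * X) = \<phi> (lK) * (e * X)"
proof -
  have "a * (e * X) = (a * e) * X" by (simp only: mult.assoc)
  also have "\<dots> = \<phi> (lK) * (e * X)" by (simp only: ae distrib_right left_diff_distrib mult_1_left mult.assoc)
  finally show ?thesis .
qed

lemma fb_t: "f * (b * X) = \<phi> (lK) * (f * X)"
proof -
  have "f * (b * X) = (f * b) * X" by (simp only: mult.assoc)
  also have "\<dots> = \<phi> (lK) * (f * X)" by (simp only: fb distrib_right left_diff_distrib mult_1_left mult.assoc)
  finally show ?thesis .
qed

lemma bf_t: "b * (f * X) = \<phi> (lK) * (f * X)"
proof -
  have "b * (f * X) = (b * f) * X" by (simp only: mult.assoc)
  also have "\<dots> = \<phi> (lK) * (f * X)" by (simp only: bf distrib_right left_diff_distrib mult_1_left mult.assoc)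
  finally show ?thesis .
qed

lemma bab_t: "b * (a * (b * X)) = (a * (b * (a * X)))"
proof -
  have "b * (a * (b * X)) = (b * (a * b)) * X" by (simp only: mult.assoc)
  also have "\<dots> = (a * (b * (a * X)))" by (simp only: bab distrib_right left_diff_distrib mult_1_left mult.assoc)
  finally show ?thesis .
qed

lemma efe_t: "e * (f * (e * X)) = (e * X)"
proof -
  have "e * (f * (e * X)) = (e * (f * e)) * X" by (simp only: mult.assoc)
  also have "\<dots> = (e * X)" by (simp only: efe distrib_right left_diff_distrib mult_1_left mult.assoc)
  finally show ?thesis .
qed

lemma fef_t: "f * (e * (f * X)) = (f * X)"
proof -
  have "f * (e * (f * X)) = (f * (e * f)) * X" by (simp only: mult.assoc)
  also have "\<dots> = (f * X)" by (simp only: fef distrib_right left_diff_distrib mult_1_left mult.assoc)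
  finally show ?thesis .
qed

lemma abe_t: "a * (b * (e * X)) = (f * (e * X))"
proof -
  have "a * (b * (e * X)) = (a * (b * e)) * X" by (simp only: mult.assoc)
  also have "\<dots> = (f * (e * X))" by (simp only: abe distrib_right left_diff_distrib mult_1_left mult.assoc)
  finally show ?thesis .
qed

lemma baf_t: "b * (a * (f * X)) = (e * (f * X))"
proof -
  have "b * (a * (f * X)) = (b * (a * f)) * X" by (simp only: mult.assoc)
  also have "\<dots> = (e * (f * X))" by (simp only: baf distrib_right left_diff_distrib mult_1_left mult.assoc)
  finally show ?thesis .
qed

lemma ebe_t: "e * (b * (e * X)) = \<phi> (rK) * (e * X)"
proof -
  have "e * (b * (e * X)) = (e * (b * e)) * X" by (simp only: mult.assoc)
  also have "\<dots> = \<phi> (rK) * (e * X)" by (simp only: ebe distrib_right left_diff_distrib mult_1_left mult.assoc)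
  finally show ?thesis .
qed

lemma faf_t: "f * (a * (f * X)) = \<phi> (rK) * (f * X)"
proof -
  have "f * (a * (f * X)) = (f * (a * f)) * X" by (simp only: mult.assoc)
  also have "\<dots> = \<phi> (rK) * (f * X)" by (simp only: faf distrib_right left_diff_distrib mult_1_left mult.assoc)
  finally show ?thesis .
qed

lemma afe_t: "a * (f * (e * X)) = (b * (e * X)) - \<phi> (zK) * (e * X) + \<phi> (zK) * (f * (e * X))"
proof -
  have "a * (f * (e * X)) = (a * (f * e)) * X" by (simp only: mult.assoc)
  also have "\<dots> = (b * (e * X)) - \<phi> (zK) * (e * X) + \<phi> (zK) * (f * (e * X))" by (simp only: afe distrib_right left_diff_distrib mult_1_left mult.assoc)
  finally show ?thesis .
qed

lemma fab_t: "f * (a * (b * X)) = (f * (e * X))"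
proof -
  have "f * (a * (b * X)) = (f * (a * b)) * X" by (simp only: mult.assoc)
  also have "\<dots> = (f * (e * X))" by (simp only: fab distrib_right left_diff_distrib mult_1_left mult.assoc)
  finally show ?thesis .
qed

lemma bef_t: "b * (e * (f * X)) = (a * (f * X)) - \<phi> (zK) * (f * X) + \<phi> (zK) * (e * (f * X))"
proof -
  have "b * (e * (f * X)) = (b * (e * f)) * X" by (simp only: mult.assoc)
  also have "\<dots> = (a * (f * X)) - \<phi> (zK) * (f * X) + \<phi> (zK) * (e * (f * X))" by (simp only: bef distrib_right left_diff_distrib mult_1_left mult.assoc)
  finally show ?thesis .
qed

lemma eba_t: "e * (b * (a * X)) = (e * (f * X))"
proof -
  have "e * (b * (a * X)) = (e * (b * a)) * X" by (simp only: mult.assoc)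
  also have "\<dots> = (e * (f * X))" by (simp only: eba distrib_right left_diff_distrib mult_1_left mult.assoc)
  finally show ?thesis .
qed

lemma feb_t: "f * (e * (b * X)) = (f * (a * X)) + \<phi> (zK) * (f * (e * X)) - \<phi> (zK) * (f * X)"
proof -
  have "f * (e * (b * X)) = (f * (e * b)) * X" by (simp only: mult.assoc)
  also have "\<dots> = (f * (a * X)) + \<phi> (zK) * (f * (e * X)) - \<phi> (zK) * (f * X)" by (simp only: feb distrib_right left_diff_distrib mult_1_left mult.assoc)
  finally show ?thesis .
qed

lemma efa_t: "e * (f * (a * X)) = (e * (b * X)) + \<phi> (zK) * (e * (f * X)) - \<phi> (zK) * (e * X)"
proof -
  have "e * (f * (a * X)) = (e * (f * a)) * X" by (simp only: mult.assoc)
  also have "\<dots> = (e * (b * X)) + \<phi> (zK) * (e * (f * X)) - \<phi> (zK) * (e * X)" by (simp only: efa distrib_right left_diff_distrib mult_1_left mult.assoc)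
  finally show ?thesis .
qed

lemma beb_t: "b * (e * (b * X)) = (a * (f * (a * X))) + \<phi> (zK) * (e * (b * X)) - \<phi> (zK) * (a * (f * X)) - \<phi> (zK) * (f * (a * X)) + \<phi> (zK * zK) * (f * X) + \<phi> (zK) * (b * (e * X)) - \<phi> (zK * zK) * (e * X)"
proof -
  have "b * (e * (b * X)) = (b * (e * b)) * X" by (simp only: mult.assoc)
  also have "\<dots> = (a * (f * (a * X))) + \<phi> (zK) * (e * (b * X)) - \<phi> (zK) * (a * (f * X)) - \<phi> (zK) * (f * (a * X)) + \<phi> (zK * zK) * (f * X) + \<phi> (zK) * (b * (e * X)) - \<phi> (zK * zK) * (e * X)" by (simp only: beb distrib_right left_diff_distrib mult_1_left mult.assoc)
  finally show ?thesis .
qed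

lemmas P1 = nrm aa aa_t bb bb_t ee ee_t ff ff_t ea ea_t ae ae_t fb fb_t bf bf_t bab bab_t efe efe_t fef fef_t abe abe_t baf baf_t ebe ebe_t faf faf_t afe afe_t fab fab_t bef bef_t eba eba_t feb feb_t efa efa_t beb beb_t

definition "wab = a * b"

definition "waf = a * f"

definition "wba = b * a"

definition "wbe = b * e"

definition "web = e * b"

definition "wef = e * f"

definition "wfa = f * a"

definition "wfe = f * e"

definition "waba = a * (b * a)"

definition "wafa = a * (f * a)"

lemma fold_ab: "a * b = wab" by (simp add: wab_def)

lemma fold_af: "a * f = waf" by (simp add: waf_def)

lemma fold_ba: "b * a = wba" by (simp add: wba_def)

lemma fold_be: "b * e = wbe" by (simp add: wbe_def)

lemma fold_eb: "e * b = web" by (simp add: web_def)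

lemma fold_ef: "e * f = wef" by (simp add: wef_def)

lemma fold_fa: "f * a = wfa" by (simp add: wfa_def)

lemma fold_fe: "f * e = wfe" by (simp add: wfe_def)

lemma fold_aba: "a * wba = waba" by (simp add: waba_def wba_def)

lemma fold_afa: "a * wfa = wafa" by (simp add: wafa_def wfa_def)

lemmas P2 = fold_ab fold_af fold_ba fold_be fold_eb fold_ef fold_fa fold_fe fold_aba fold_afa

definition lin :: "K \<Rightarrow> K \<Rightarrow> K \<Rightarrow> K \<Rightarrow> K \<Rightarrow> K \<Rightarrow> K \<Rightarrow> K \<Rightarrow> K \<Rightarrow> K \<Rightarrow> K \<Rightarrow> K \<Rightarrow> K \<Rightarrow> K \<Rightarrow> K \<Rightarrow> 'a" where
  "lin c0 c1 c2 c3 c4 c5 c6 c7 c8 c9 c10 c11 c12 c13 c14 = \<phi> c0 + \<phi> c1 * a + \<phi> c2 * b + \<phi> c3 * e + \<phi> c4 * f + \<phi> c5 * wab + \<phi> c6 * waf + \<phi> c7 * wba + \<phi> c8 * wbe + \<phi> c9 * web + \<phi> c10 * wef + \<phi> c11 * wfa + \<phi> c12 * wfe + \<phi> c13 * waba + \<phi> c14 * wafa"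

lemma lin_add: "lin c0 c1 c2 c3 c4 c5 c6 c7 c8 c9 c10 c11 c12 c13 c14 + lin d0 d1 d2 d3 d4 d5 d6 d7 d8 d9 d10 d11 d12 d13 d14 = lin (c0 + d0) (c1 + d1) (c2 + d2) (c3 + d3) (c4 + d4) (c5 + d5) (c6 + d6) (c7 + d7) (c8 + d8) (c9 + d9) (c10 + d10) (c11 + d11) (c12 + d12) (c13 + d13) (c14 + d14)"
  by (simp add: lin_def sc_add distrib_right algebra_simps)

lemma lin_diff: "lin c0 c1 c2 c3 c4 c5 c6 c7 c8 c9 c10 c11 c12 c13 c14 - lin d0 d1 d2 d3 d4 d5 d6 d7 d8 d9 d10 d11 d12 d13 d14 = lin (c0 - d0) (c1 - d1) (c2 - d2) (c3 - d3) (c4 - d4) (c5 - d5) (c6 - d6) (c7 - d7) (c8 - d8) (c9 - d9) (c10 - d10) (c11 - d11) (c12 - d12) (c13 - d13) (c14 - d14)"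
  by (simp add: lin_def sc_diff left_diff_distrib algebra_simps)

lemma lin_neg: "- lin c0 c1 c2 c3 c4 c5 c6 c7 c8 c9 c10 c11 c12 c13 c14 = lin (- c0) (- c1) (- c2) (- c3) (- c4) (- c5) (- c6) (- c7) (- c8) (- c9) (- c10) (- c11) (- c12) (- c13) (- c14)"
  by (simp add: lin_def sc_minus algebra_simps)

lemma lin_eq: "c0 = d0 \<Longrightarrow> c1 = d1 \<Longrightarrow> c2 = d2 \<Longrightarrow> c3 = d3 \<Longrightarrow> c4 = d4 \<Longrightarrow> c5 = d5 \<Longrightarrow> c6 = d6 \<Longrightarrow> c7 = d7 \<Longrightarrow> c8 = d8 \<Longrightarrow> c9 = d9 \<Longrightarrow> c10 = d10 \<Longrightarrow> c11 = d11 \<Longrightarrow> c12 = d12 \<Longrightarrow> c13 = d13 \<Longrightarrow> c14 = d14 \<Longrightarrow> lin c0 c1 c2 c3 c4 c5 c6 c7 c8 c9 c10 c11 c12 c13 c14 = lin d0 d1 d2 d3 d4 d5 d6 d7 d8 d9 d10 d11 d12 d13 d14"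
  by simp

lemma c3a_1: "\<phi> k * a = lin 0 k 0 0 0 0 0 0 0 0 0 0 0 0 0" by (simp add: lin_def sc_zero)

lemma c3a_2: "\<phi> k * b = lin 0 0 k 0 0 0 0 0 0 0 0 0 0 0 0" by (simp add: lin_def sc_zero)

lemma c3a_3: "\<phi> k * e = lin 0 0 0 k 0 0 0 0 0 0 0 0 0 0 0" by (simp add: lin_def sc_zero)

lemma c3a_4: "\<phi> k * f = lin 0 0 0 0 k 0 0 0 0 0 0 0 0 0 0" by (simp add: lin_def sc_zero)

lemma c3a_5: "\<phi> k * wab = lin 0 0 0 0 0 k 0 0 0 0 0 0 0 0 0" by (simp add: lin_def sc_zero)

lemma c3a_6: "\<phi> k * waf = lin 0 0 0 0 0 0 k 0 0 0 0 0 0 0 0" by (simp add: lin_def sc_zero)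

lemma c3a_7: "\<phi> k * wba = lin 0 0 0 0 0 0 0 k 0 0 0 0 0 0 0" by (simp add: lin_def sc_zero)

lemma c3a_8: "\<phi> k * wbe = lin 0 0 0 0 0 0 0 0 k 0 0 0 0 0 0" by (simp add: lin_def sc_zero)

lemma c3a_9: "\<phi> k * web = lin 0 0 0 0 0 0 0 0 0 k 0 0 0 0 0" by (simp add: lin_def sc_zero)

lemma c3a_10: "\<phi> k * wef = lin 0 0 0 0 0 0 0 0 0 0 k 0 0 0 0" by (simp add: lin_def sc_zero)

lemma c3a_11: "\<phi> k * wfa = lin 0 0 0 0 0 0 0 0 0 0 0 k 0 0 0" by (simp add: lin_def sc_zero)

lemma c3a_12: "\<phi> k * wfe = lin 0 0 0 0 0 0 0 0 0 0 0 0 k 0 0" by (simp add: lin_def sc_zero)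

lemma c3a_13: "\<phi> k * waba = lin 0 0 0 0 0 0 0 0 0 0 0 0 0 k 0" by (simp add: lin_def sc_zero)

lemma c3a_14: "\<phi> k * wafa = lin 0 0 0 0 0 0 0 0 0 0 0 0 0 0 k" by (simp add: lin_def sc_zero)

lemma phi_lin1: "lin c0 c1 c2 c3 c4 c5 c6 c7 c8 c9 c10 c11 c12 c13 c14 + \<phi> k = lin (c0 + k) c1 c2 c3 c4 c5 c6 c7 c8 c9 c10 c11 c12 c13 c14" by (simp add: lin_def sc_add algebra_simps)

lemma phi_lin2: "\<phi> k + lin c0 c1 c2 c3 c4 c5 c6 c7 c8 c9 c10 c11 c12 c13 c14 = lin (k + c0) c1 c2 c3 c4 c5 c6 c7 c8 c9 c10 c11 c12 c13 c14" by (simp add: lin_def sc_add algebra_simps)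

lemma phi_lin3: "lin c0 c1 c2 c3 c4 c5 c6 c7 c8 c9 c10 c11 c12 c13 c14 - \<phi> k = lin (c0 - k) c1 c2 c3 c4 c5 c6 c7 c8 c9 c10 c11 c12 c13 c14" by (simp add: lin_def sc_diff algebra_simps)

lemma phi_lin4: "\<phi> k - lin c0 c1 c2 c3 c4 c5 c6 c7 c8 c9 c10 c11 c12 c13 c14 = lin (k - c0) (- c1) (- c2) (- c3) (- c4) (- c5) (- c6) (- c7) (- c8) (- c9) (- c10) (- c11) (- c12) (- c13) (- c14)" by (simp add: lin_def sc_diff sc_minus algebra_simps)

lemma phi_phi1: "\<phi> k + \<phi> m = \<phi> (k + m)" by (simp add: sc_add)

lemma phi_phi2: "\<phi> k - \<phi> m = \<phi> (k - m)" by (simp add: sc_diff)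

lemma phi_phi3: "- \<phi> k = \<phi> (- k)" by (simp add: sc_minus)

lemmas P3a = c3a_1 c3a_2 c3a_3 c3a_4 c3a_5 c3a_6 c3a_7 c3a_8 c3a_9 c3a_10 c3a_11 c3a_12 c3a_13 c3a_14

lemmas P3b = phi_lin1 phi_lin2 phi_lin3 phi_lin4 phi_phi1 phi_phi2 phi_phi3 lin_add lin_diff lin_neg


definition "Ya U = \<phi> (alphaK U) + \<phi> (betaK U) * a + \<phi> (gammaK U) * e"
definition "Yb U = \<phi> (alphaK U) + \<phi> (betaK U) * b + \<phi> (gammaK U) * f"

lemma a_lin: "a * lin c0 c1 c2 c3 c4 c5 c6 c7 c8 c9 c10 c11 c12 c13 c14 = lin (c1) (c0 + (zK) * c1) (c5) ((- zK * lK) * c1 + (lK) * c3 + (- zK) * c12 + (zK * zK * lK) * c14) (c6) (c2 + (zK) * c5) (c4 + (zK) * c6) (c13) (c12) ((- zK * lK) * c5 + (lK) * c9 + (- zK * lK) * c14) ((- zK * lK) * c6 + (lK) * c10 + (- zK * lK) * c13 + (- zK * zK * lK) * c14) (c14) (c8 + (zK) * c12) (c7 + (zK) * c13) (c11 + (zK) * c14)"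
  unfolding lin_def wab_def waf_def wba_def wbe_def web_def wef_def wfa_def wfe_def waba_def wafa_def
  apply (simp only: nrm)
  apply (simp only: P1)
  apply (simp only: P2)
  apply (simp only: P3a)
  apply (simp only: P3b)
  apply (rule lin_eq)
  apply (simp_all add: algebra_simps)
  done

lemma b_lin: "b * lin c0 c1 c2 c3 c4 c5 c6 c7 c8 c9 c10 c11 c12 c13 c14 = lin (c2) (c7) (c0 + (zK) * c2) (c8 + (- zK * zK) * c9 + (- zK) * c14) ((- zK * lK) * c2 + (lK) * c4 + (zK * zK) * c9 + (- zK) * c10) (c13) ((- zK) * c9 + c10) (c1 + (zK) * c7) (c3 + (zK) * c8 + (zK) * c9) ((zK) * c9 + c14) (c6 + (zK) * c10 + (zK) * c14) ((- zK * lK) * c7 + (- zK) * c9 + (lK) * c11) ((- zK * lK) * c8 + (lK) * c12 + (- zK * lK) * c13) (c5 + (zK) * c13) (c9)"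
  unfolding lin_def wab_def waf_def wba_def wbe_def web_def wef_def wfa_def wfe_def waba_def wafa_def
  apply (simp only: nrm)
  apply (simp only: P1)
  apply (simp only: P2)
  apply (simp only: P3a)
  apply (simp only: P3b)
  apply (rule lin_eq)
  apply (simp_all add: algebra_simps)
  done

lemma e_lin: "e * lin c0 c1 c2 c3 c4 c5 c6 c7 c8 c9 c10 c11 c12 c13 c14 = lin (0) (0) (0) (c0 + (lK) * c1 + (xK) * c3 + (rK) * c8 + (- zK) * c11 + c12 + (- zK * lK) * c14) (0) (0) (0) (0) (0) (c2 + (lK) * c5 + (xK) * c9 + c11 + (lK) * c14) (c4 + (lK) * c6 + c7 + (xK) * c10 + (zK) * c11 + (lK) * c13 + (zK * lK) * c14) (0) (0) (0) (0)"
  unfolding lin_def wab_def waf_def wba_def wbe_def web_def wef_def wfa_def wfe_def waba_def wafa_def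
  apply (simp only: nrm)
  apply (simp only: P1)
  apply (simp only: P2)
  apply (simp only: P3a)
  apply (simp only: P3b)
  apply (rule lin_eq)
  apply (simp_all add: algebra_simps)
  done

lemma f_lin: "f * lin c0 c1 c2 c3 c4 c5 c6 c7 c8 c9 c10 c11 c12 c13 c14 = lin (0) (0) (0) (0) (c0 + (lK) * c2 + (xK) * c4 + (rK) * c6 + (- zK) * c9 + c10) (0) (0) (0) (0) (0) (0) (c1 + (lK) * c7 + c9 + (xK) * c11 + (rK) * c14) (c3 + c5 + (lK) * c8 + (zK) * c9 + (xK) * c12 + (lK) * c13) (0) (0)"
  unfolding lin_def wab_def waf_def wba_def wbe_def web_def wef_def wfa_def wfe_def waba_def wafa_def
  apply (simp only: nrm)
  apply (simp only: P1)
  apply (simp only: P2)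
  apply (simp only: P3a)
  apply (simp only: P3b)
  apply (rule lin_eq)
  apply (simp_all add: algebra_simps)
  done

lemma sc_lin: "\<phi> k * lin c0 c1 c2 c3 c4 c5 c6 c7 c8 c9 c10 c11 c12 c13 c14 = lin (k * c0) (k * c1) (k * c2) (k * c3) (k * c4) (k * c5) (k * c6) (k * c7) (k * c8) (k * c9) (k * c10) (k * c11) (k * c12) (k * c13) (k * c14)"
  by (simp add: lin_def distrib_left sc_sc sc_sc2)
lemma one_lin: "lin 1 0 0 0 0 0 0 0 0 0 0 0 0 0 0 = 1"
  by (simp add: lin_def sc_zero sc_one)

lemma qq_nz: "qK * qK - 1 \<noteq> 0" "qK * qK \<noteq> 1" "qK ^ 2 \<noteq> 1" "qK ^ 2 - 1 \<noteq> 0"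
  using qK_pow_ne1[of 2] by (auto simp: power2_eq_square)

lemma cert: "M \<noteq> 0 \<Longrightarrow> M * (L - R) = cA * (zK * qK - (qK ^ 2 - 1)) + cB * (lK * rK - 1) + cC * (xK * zK - (zK + rK - lK)) \<Longrightarrow> L = R"
  using rels by simp

lemma ybe_core: "Ya U * Yb (U * W) * Ya W = Yb W * Ya (U * W) * Yb U"
proof -
  have "Ya U * Yb (U * W) * Ya W = Ya U * (Yb (U * W) * (Ya W * lin 1 0 0 0 0 0 0 0 0 0 0 0 0 0 0))"
    by (simp only: one_lin mult.assoc mult_1_right)
  moreover have "Yb W * Ya (U * W) * Yb U = Yb W * (Ya (U * W) * (Yb U * lin 1 0 0 0 0 0 0 0 0 0 0 0 0 0 0))"
    by (simp only: one_lin mult.assoc mult_1_right)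
  moreover have "Ya U * (Yb (U * W) * (Ya W * lin 1 0 0 0 0 0 0 0 0 0 0 0 0 0 0)) = Yb W * (Ya (U * W) * (Yb U * lin 1 0 0 0 0 0 0 0 0 0 0 0 0 0 0))"
    unfolding Ya_def Yb_def
    apply (simp only: distrib_right mult.assoc a_lin b_lin e_lin f_lin sc_lin lin_add)
    apply (rule lin_eq)
    apply (simp_all only: alphaK_def betaK_def gammaK_def)
    subgoal by algebra
    subgoal
      apply (rule cert[where M="1 * qK ^ 1" and cA="qK ^ 2 * U ^ 3 * W ^ 3 - qK ^ 2 * U ^ 3 * W ^ 4 - qK ^ 2 * U ^ 4 * W ^ 3 + qK ^ 2 * U ^ 4 * W ^ 4 - qK ^ 4 * U ^ 3 * W ^ 3 + qK ^ 4 * U ^ 3 * W ^ 4 + qK ^ 4 * U ^ 4 * W ^ 3 - qK ^ 4 * U ^ 4 * W ^ 4 + rK * qK ^ 3 * U ^ 2 * W ^ 2 - rK * qK ^ 3 * U ^ 2 * W ^ 4 - rK * qK ^ 3 * U ^ 3 * W ^ 3 + rK * qK ^ 3 * U ^ 3 * W ^ 4 - rK * qK ^ 3 * U ^ 4 * W ^ 2 + rK * qK ^ 3 * U ^ 4 * W ^ 3 - rK * qK ^ 5 * U ^ 2 * W ^ 2 + rK * qK ^ 5 * U ^ 2 * W ^ 4 + rK * qK ^ 5 * U ^ 3 * W ^ 3 - rK * qK ^ 5 * U ^ 3 * W ^ 4 + rK * qK ^ 5 * U ^ 4 * W ^ 2 - rK * qK ^ 5 * U ^ 4 * W ^ 3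 + rK ^ 2 * qK ^ 4 * U * W ^ 2 - rK ^ 2 * qK ^ 4 * U * W ^ 3 + rK ^ 2 * qK ^ 4 * U ^ 2 * W - rK ^ 2 * qK ^ 4 * U ^ 2 * W ^ 2 - rK ^ 2 * qK ^ 4 * U ^ 3 * W + rK ^ 2 * qK ^ 4 * U ^ 3 * W ^ 3 - rK ^ 2 * qK ^ 6 * U * W ^ 2 + rK ^ 2 * qK ^ 6 * U * W ^ 3 - rK ^ 2 * qK ^ 6 * U ^ 2 * W + rK ^ 2 * qK ^ 6 * U ^ 2 * W ^ 2 + rK ^ 2 * qK ^ 6 * U ^ 3 * W - rK ^ 2 * qK ^ 6 * U ^ 3 * W ^ 3 + rK ^ 3 * qK ^ 5 * U * W - rK ^ 3 * qK ^ 5 * U * W ^ 2 - rK ^ 3 * qK ^ 5 * U ^ 2 * W + rK ^ 3 * qK ^ 5 * U ^ 2 * W ^ 2 - rK ^ 3 * qK ^ 7 * U * W + rK ^ 3 * qK ^ 7 * U * W ^ 2 + rK ^ 3 * qK ^ 7 * U ^ 2 * W - rK ^ 3 * qK ^ 7 * U ^ 2 * W ^ 2" and cB="0" and cC="0"])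
       apply (simp add: qK_nz rK_nz zK_nz)
      by algebra
    subgoal
      apply (rule cert[where M="1 * qK ^ 1" and cA="- (qK ^ 2 * U ^ 3 * W ^ 3) + qK ^ 2 * U ^ 3 * W ^ 4 + qK ^ 2 * U ^ 4 * W ^ 3 - qK ^ 2 * U ^ 4 * W ^ 4 + qK ^ 4 * U ^ 3 * W ^ 3 - qK ^ 4 * U ^ 3 * W ^ 4 - qK ^ 4 * U ^ 4 * W ^ 3 + qK ^ 4 * U ^ 4 * W ^ 4 - rK * qK ^ 3 * U ^ 2 * W ^ 2 + rK * qK ^ 3 * U ^ 2 * W ^ 4 + rK * qK ^ 3 * U ^ 3 * W ^ 3 - rK * qK ^ 3 * U ^ 3 * W ^ 4 + rK * qK ^ 3 * U ^ 4 * W ^ 2 - rK * qK ^ 3 * U ^ 4 * W ^ 3 + rK * qK ^ 5 * U ^ 2 * W ^ 2 - rK * qK ^ 5 * U ^ 2 * W ^ 4 - rK * qK ^ 5 * U ^ 3 * W ^ 3 + rK * qK ^ 5 * U ^ 3 * W ^ 4 - rK * qK ^ 5 * U ^ 4 * W ^ 2 + rK * qK ^ 5 * U ^ 4 * W ^ 3 - rK ^ 2 * qK ^ 4 * U * W ^ 2 + rK ^ 2 * qK ^ 4 * U * W ^ 3 - rK ^ 2 * qK ^ 4 * U ^ 2 * W + rK ^ 2 * qK ^ 4 * U ^ 2 * W ^ 2 + rK ^ 2 * qK ^ 4 * U ^ 3 * W - rK ^ 2 * qK ^ 4 * U ^ 3 * W ^ 3 + rK ^ 2 * qK ^ 6 *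 U * W ^ 2 - rK ^ 2 * qK ^ 6 * U * W ^ 3 + rK ^ 2 * qK ^ 6 * U ^ 2 * W - rK ^ 2 * qK ^ 6 * U ^ 2 * W ^ 2 - rK ^ 2 * qK ^ 6 * U ^ 3 * W + rK ^ 2 * qK ^ 6 * U ^ 3 * W ^ 3 - rK ^ 3 * qK ^ 5 * U * W + rK ^ 3 * qK ^ 5 * U * W ^ 2 + rK ^ 3 * qK ^ 5 * U ^ 2 * W - rK ^ 3 * qK ^ 5 * U ^ 2 * W ^ 2 + rK ^ 3 * qK ^ 7 * U * W - rK ^ 3 * qK ^ 7 * U * W ^ 2 - rK ^ 3 * qK ^ 7 * U ^ 2 * W + rK ^ 3 * qK ^ 7 * U ^ 2 * W ^ 2" and cB="0" and cC="0"])
       apply (simp add: qK_nz rK_nz zK_nz)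
      by algebra
    subgoal
      apply (rule cert[where M="1 * qK ^ 3 * rK ^ 1 * zK ^ 1" and cA="- (qK ^ 3 * U ^ 3 * W ^ 3) + qK ^ 3 * U ^ 3 * W ^ 4 + qK ^ 3 * U ^ 4 * W ^ 3 - qK ^ 3 * U ^ 4 * W ^ 4 + 2 * qK ^ 5 * U ^ 3 * W ^ 3 - 2 * qK ^ 5 * U ^ 3 * W ^ 4 - 2 * qK ^ 5 * U ^ 4 * W ^ 3 + 2 * qK ^ 5 * U ^ 4 * W ^ 4 - qK ^ 7 * U ^ 3 * W ^ 3 + qK ^ 7 * U ^ 3 * W ^ 4 + qK ^ 7 * U ^ 4 * W ^ 3 - qK ^ 7 * U ^ 4 * W ^ 4 - rK * qK ^ 4 * U ^ 2 * W ^ 2 + rK * qK ^ 4 * U ^ 2 * W ^ 3 + rK * qK ^ 4 * U ^ 3 * W ^ 2 - rK * qK ^ 4 * U ^ 3 * W ^ 3 + 2 * rK * qK ^ 6 * U ^ 2 * W ^ 2 - 2 * rK * qK ^ 6 * U ^ 2 * W ^ 3 - 2 * rK * qK ^ 6 * U ^ 3 * W ^ 2 + 2 * rK * qK ^ 6 * U ^ 3 * W ^ 3 - rK * qK ^ 8 * U ^ 2 * W ^ 2 + rK * qK ^ 8 * U ^ 2 * W ^ 3 + rK * qK ^ 8 * U ^ 3 * W ^ 2 - rK * qK ^ 8 * U ^ 3 * W ^ 3 + rK ^ 2 * qK ^ 3 * U ^ 3 * W ^ 3 - rK ^ 2 * qK ^ 3 * U ^ 3 * W ^ 4 - rK ^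 2 * qK ^ 3 * U ^ 4 * W ^ 3 + rK ^ 2 * qK ^ 3 * U ^ 4 * W ^ 4 - 2 * rK ^ 2 * qK ^ 5 * U ^ 3 * W ^ 3 + 2 * rK ^ 2 * qK ^ 5 * U ^ 3 * W ^ 4 + 2 * rK ^ 2 * qK ^ 5 * U ^ 4 * W ^ 3 - 2 * rK ^ 2 * qK ^ 5 * U ^ 4 * W ^ 4 + rK ^ 2 * qK ^ 7 * U ^ 3 * W ^ 3 - rK ^ 2 * qK ^ 7 * U ^ 3 * W ^ 4 - rK ^ 2 * qK ^ 7 * U ^ 4 * W ^ 3 + rK ^ 2 * qK ^ 7 * U ^ 4 * W ^ 4 + rK ^ 3 * qK ^ 4 * U ^ 2 * W ^ 2 - rK ^ 3 * qK ^ 4 * U ^ 2 * W ^ 3 - rK ^ 3 * qK ^ 4 * U ^ 3 * W ^ 2 + rK ^ 3 * qK ^ 4 * U ^ 3 * W ^ 3 - 2 * rK ^ 3 * qK ^ 6 * U ^ 2 * W ^ 2 + 2 * rK ^ 3 * qK ^ 6 * U ^ 2 * W ^ 3 + 2 * rK ^ 3 * qK ^ 6 * U ^ 3 * W ^ 2 - 2 * rK ^ 3 * qK ^ 6 * U ^ 3 * W ^ 3 + rK ^ 3 * qK ^ 8 * U ^ 2 * W ^ 2 - rK ^ 3 * qK ^ 8 * U ^ 2 * W ^ 3 - rK ^ 3 * qK ^ 8 * U ^ 3 * W ^ 2 + rK ^ 3 * qK ^ 8 * U ^ 3 * W ^ 3 - zK * qK ^ 4 * U ^ 3 * W ^ 3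 + zK * qK ^ 4 * U ^ 3 * W ^ 4 + zK * qK ^ 4 * U ^ 4 * W ^ 3 - zK * qK ^ 4 * U ^ 4 * W ^ 4 + zK * qK ^ 6 * U ^ 3 * W ^ 3 - zK * qK ^ 6 * U ^ 3 * W ^ 4 - zK * qK ^ 6 * U ^ 4 * W ^ 3 + zK * qK ^ 6 * U ^ 4 * W ^ 4 + zK * rK * qK ^ 3 * U ^ 2 * W ^ 2 - zK * rK * qK ^ 3 * U ^ 2 * W ^ 3 - zK * rK * qK ^ 3 * U ^ 3 * W ^ 2 + zK * rK * qK ^ 3 * U ^ 3 * W ^ 4 + zK * rK * qK ^ 3 * U ^ 4 * W ^ 3 - zK * rK * qK ^ 3 * U ^ 4 * W ^ 4 - 3 * zK * rK * qK ^ 5 * U ^ 2 * W ^ 2 + 2 * zK * rK * qK ^ 5 * U ^ 2 * W ^ 3 + zK * rK * qK ^ 5 * U ^ 2 * W ^ 4 + 2 * zK * rK * qK ^ 5 * U ^ 3 * W ^ 2 + zK * rK * qK ^ 5 * U ^ 3 * W ^ 3 - 3 * zK * rK * qK ^ 5 * U ^ 3 * W ^ 4 + zK * rK * qK ^ 5 * U ^ 4 * W ^ 2 - 3 * zK * rK * qK ^ 5 * U ^ 4 * W ^ 3 + 2 * zK * rK * qK ^ 5 * U ^ 4 * W ^ 4 + 2 * zK * rK * qK ^ 7 * U ^ 2 * W ^ 2 - zK * rK * qK ^ 7 * U ^ 2 * W ^ 3 - zK * rK * qK ^ 7 * U ^ 2 * W ^ 4 - zK * rK * qK ^ 7 * U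 ^ 3 * W ^ 2 - zK * rK * qK ^ 7 * U ^ 3 * W ^ 3 + 2 * zK * rK * qK ^ 7 * U ^ 3 * W ^ 4 - zK * rK * qK ^ 7 * U ^ 4 * W ^ 2 + 2 * zK * rK * qK ^ 7 * U ^ 4 * W ^ 3 - zK * rK * qK ^ 7 * U ^ 4 * W ^ 4 - zK * rK ^ 2 * qK ^ 6 * U * W ^ 2 + zK * rK ^ 2 * qK ^ 6 * U * W ^ 3 - zK * rK ^ 2 * qK ^ 6 * U ^ 2 * W + zK * rK ^ 2 * qK ^ 6 * U ^ 2 * W ^ 2 + zK * rK ^ 2 * qK ^ 6 * U ^ 3 * W - zK * rK ^ 2 * qK ^ 6 * U ^ 3 * W ^ 3 + zK * rK ^ 2 * qK ^ 8 * U * W ^ 2 - zK * rK ^ 2 * qK ^ 8 * U * W ^ 3 + zK * rK ^ 2 * qK ^ 8 * U ^ 2 * W - zK * rK ^ 2 * qK ^ 8 * U ^ 2 * W ^ 2 - zK * rK ^ 2 * qK ^ 8 * U ^ 3 * W + zK * rK ^ 2 * qK ^ 8 * U ^ 3 * W ^ 3 - zK * rK ^ 3 * qK ^ 5 * U * W + zK * rK ^ 3 * qK ^ 5 * U * W ^ 2 + zK * rK ^ 3 * qK ^ 5 * U ^ 2 * W - zK * rK ^ 3 * qK ^ 5 * U ^ 2 * W ^ 3 - zK * rK ^ 3 * qK ^ 5 * U ^ 3 * W ^ 2 + zK * rK ^ 3 * qK ^ 5 * U ^ 3 * W ^ 3 + zK * rK ^ 3 * qK ^ 7 * U * W - zK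 * rK ^ 3 * qK ^ 7 * U * W ^ 2 - zK * rK ^ 3 * qK ^ 7 * U ^ 2 * W - zK * rK ^ 3 * qK ^ 7 * U ^ 2 * W ^ 2 + 2 * zK * rK ^ 3 * qK ^ 7 * U ^ 2 * W ^ 3 + 2 * zK * rK ^ 3 * qK ^ 7 * U ^ 3 * W ^ 2 - 2 * zK * rK ^ 3 * qK ^ 7 * U ^ 3 * W ^ 3 + zK * rK ^ 3 * qK ^ 9 * U ^ 2 * W ^ 2 - zK * rK ^ 3 * qK ^ 9 * U ^ 2 * W ^ 3 - zK * rK ^ 3 * qK ^ 9 * U ^ 3 * W ^ 2 + zK * rK ^ 3 * qK ^ 9 * U ^ 3 * W ^ 3 + zK ^ 2 * rK * qK ^ 4 * U ^ 2 * W ^ 2 - zK ^ 2 * rK * qK ^ 4 * U ^ 2 * W ^ 3 - zK ^ 2 * rK * qK ^ 4 * U ^ 3 * W ^ 2 + zK ^ 2 * rK * qK ^ 4 * U ^ 3 * W ^ 4 + zK ^ 2 * rK * qK ^ 4 * U ^ 4 * W ^ 3 - zK ^ 2 * rK * qK ^ 4 * U ^ 4 * W ^ 4 - zK ^ 2 * rK * qK ^ 6 * U ^ 2 * W ^ 2 + zK ^ 2 * rK * qK ^ 6 * U ^ 2 * W ^ 3 + zK ^ 2 * rK * qK ^ 6 * U ^ 3 * W ^ 2 - zK ^ 2 * rK * qK ^ 6 * U ^ 3 * W ^ 4 - zK ^ 2 * rK * qK ^ 6 * U ^ 4 * W ^ 3 + zK ^ 2 * rK * qK ^ 6 * U ^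 4 * W ^ 4 + zK ^ 2 * rK ^ 2 * qK ^ 5 * U * W ^ 2 - zK ^ 2 * rK ^ 2 * qK ^ 5 * U * W ^ 3 + zK ^ 2 * rK ^ 2 * qK ^ 5 * U ^ 2 * W - 2 * zK ^ 2 * rK ^ 2 * qK ^ 5 * U ^ 2 * W ^ 2 + zK ^ 2 * rK ^ 2 * qK ^ 5 * U ^ 2 * W ^ 4 - zK ^ 2 * rK ^ 2 * qK ^ 5 * U ^ 3 * W + 2 * zK ^ 2 * rK ^ 2 * qK ^ 5 * U ^ 3 * W ^ 3 - zK ^ 2 * rK ^ 2 * qK ^ 5 * U ^ 3 * W ^ 4 + zK ^ 2 * rK ^ 2 * qK ^ 5 * U ^ 4 * W ^ 2 - zK ^ 2 * rK ^ 2 * qK ^ 5 * U ^ 4 * W ^ 3 - zK ^ 2 * rK ^ 2 * qK ^ 7 * U * W ^ 2 + zK ^ 2 * rK ^ 2 * qK ^ 7 * U * W ^ 3 - zK ^ 2 * rK ^ 2 * qK ^ 7 * U ^ 2 * W + 2 * zK ^ 2 * rK ^ 2 * qK ^ 7 * U ^ 2 * W ^ 2 - zK ^ 2 * rK ^ 2 * qK ^ 7 * U ^ 2 * W ^ 4 + zK ^ 2 * rK ^ 2 * qK ^ 7 * U ^ 3 * W - 2 * zK ^ 2 * rK ^ 2 * qK ^ 7 * U ^ 3 * W ^ 3 + zK ^ 2 * rK ^ 2 * qK ^ 7 * U ^ 3 * W ^ 4 - zK ^ 2 * rK ^ 2 * qK ^ 7 * U ^ 4 * W ^ 2 + zK ^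 2 * rK ^ 2 * qK ^ 7 * U ^ 4 * W ^ 3 + zK ^ 2 * rK ^ 3 * qK ^ 6 * U * W - zK ^ 2 * rK ^ 3 * qK ^ 6 * U * W ^ 2 - zK ^ 2 * rK ^ 3 * qK ^ 6 * U ^ 2 * W + zK ^ 2 * rK ^ 3 * qK ^ 6 * U ^ 2 * W ^ 3 + zK ^ 2 * rK ^ 3 * qK ^ 6 * U ^ 3 * W ^ 2 - zK ^ 2 * rK ^ 3 * qK ^ 6 * U ^ 3 * W ^ 3 - zK ^ 2 * rK ^ 3 * qK ^ 8 * U * W + zK ^ 2 * rK ^ 3 * qK ^ 8 * U * W ^ 2 + zK ^ 2 * rK ^ 3 * qK ^ 8 * U ^ 2 * W - zK ^ 2 * rK ^ 3 * qK ^ 8 * U ^ 2 * W ^ 3 - zK ^ 2 * rK ^ 3 * qK ^ 8 * U ^ 3 * W ^ 2 + zK ^ 2 * rK ^ 3 * qK ^ 8 * U ^ 3 * W ^ 3" and cB="- (qK ^ 3 * U ^ 3 * W ^ 3) + qK ^ 3 * U ^ 3 * W ^ 4 + qK ^ 3 * U ^ 4 * W ^ 3 - qK ^ 3 * U ^ 4 * W ^ 4 + 3 * qK ^ 5 * U ^ 3 * W ^ 3 - 3 * qK ^ 5 * U ^ 3 * W ^ 4 - 3 * qK ^ 5 * U ^ 4 * W ^ 3 + 3 * qK ^ 5 * U ^ 4 * W ^ 4 - 3 * qK ^ 7 * U ^ 3 * W ^ 3 + 3 * qK ^ 7 * U ^ 3 * W ^ 4 + 3 * qK ^ 7 * U ^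 4 * W ^ 3 - 3 * qK ^ 7 * U ^ 4 * W ^ 4 + qK ^ 9 * U ^ 3 * W ^ 3 - qK ^ 9 * U ^ 3 * W ^ 4 - qK ^ 9 * U ^ 4 * W ^ 3 + qK ^ 9 * U ^ 4 * W ^ 4 - rK * qK ^ 4 * U ^ 2 * W ^ 2 + rK * qK ^ 4 * U ^ 2 * W ^ 3 + rK * qK ^ 4 * U ^ 3 * W ^ 2 - rK * qK ^ 4 * U ^ 3 * W ^ 3 + 3 * rK * qK ^ 6 * U ^ 2 * W ^ 2 - 3 * rK * qK ^ 6 * U ^ 2 * W ^ 3 - 3 * rK * qK ^ 6 * U ^ 3 * W ^ 2 + 3 * rK * qK ^ 6 * U ^ 3 * W ^ 3 - 3 * rK * qK ^ 8 * U ^ 2 * W ^ 2 + 3 * rK * qK ^ 8 * U ^ 2 * W ^ 3 + 3 * rK * qK ^ 8 * U ^ 3 * W ^ 2 - 3 * rK * qK ^ 8 * U ^ 3 * W ^ 3 + rK * qK ^ 10 * U ^ 2 * W ^ 2 - rK * qK ^ 10 * U ^ 2 * W ^ 3 - rK * qK ^ 10 * U ^ 3 * W ^ 2 + rK * qK ^ 10 * U ^ 3 * W ^ 3 - 2 * zK * qK ^ 4 * U ^ 3 * W ^ 3 + 2 * zK * qK ^ 4 * U ^ 3 * W ^ 4 + 2 * zK * qK ^ 4 * U ^ 4 * W ^ 3 - 2 * zK * qK ^ 4 * U ^ 4 * W ^ 4 + 4 * zK * qK ^ 6 * U ^ 3 * W ^ 3 - 4 * zK * qK ^ 6 * U ^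 3 * W ^ 4 - 4 * zK * qK ^ 6 * U ^ 4 * W ^ 3 + 4 * zK * qK ^ 6 * U ^ 4 * W ^ 4 - 2 * zK * qK ^ 8 * U ^ 3 * W ^ 3 + 2 * zK * qK ^ 8 * U ^ 3 * W ^ 4 + 2 * zK * qK ^ 8 * U ^ 4 * W ^ 3 - 2 * zK * qK ^ 8 * U ^ 4 * W ^ 4 - 2 * zK * rK * qK ^ 5 * U ^ 2 * W ^ 2 + zK * rK * qK ^ 5 * U ^ 2 * W ^ 3 + zK * rK * qK ^ 5 * U ^ 2 * W ^ 4 + zK * rK * qK ^ 5 * U ^ 3 * W ^ 2 - zK * rK * qK ^ 5 * U ^ 3 * W ^ 4 + zK * rK * qK ^ 5 * U ^ 4 * W ^ 2 - zK * rK * qK ^ 5 * U ^ 4 * W ^ 3 + 4 * zK * rK * qK ^ 7 * U ^ 2 * W ^ 2 - 2 * zK * rK * qK ^ 7 * U ^ 2 * W ^ 3 - 2 * zK * rK * qK ^ 7 * U ^ 2 * W ^ 4 - 2 * zK * rK * qK ^ 7 * U ^ 3 * W ^ 2 + 2 * zK * rK * qK ^ 7 * U ^ 3 * W ^ 4 - 2 * zK * rK * qK ^ 7 * U ^ 4 * W ^ 2 + 2 * zK * rK * qK ^ 7 * U ^ 4 * W ^ 3 - 2 * zK * rK * qK ^ 9 * U ^ 2 * W ^ 2 + zK * rK * qK ^ 9 * U ^ 2 * W ^ 3 + zK * rK * qK ^ 9 * U ^ 2 * W ^ 4 + zK * rK * qK ^ 9 * U ^ 3 * W ^ 2 - zK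 * rK * qK ^ 9 * U ^ 3 * W ^ 4 + zK * rK * qK ^ 9 * U ^ 4 * W ^ 2 - zK * rK * qK ^ 9 * U ^ 4 * W ^ 3 - zK * rK ^ 2 * qK ^ 6 * U * W ^ 2 + zK * rK ^ 2 * qK ^ 6 * U * W ^ 3 - zK * rK ^ 2 * qK ^ 6 * U ^ 2 * W + 2 * zK * rK ^ 2 * qK ^ 6 * U ^ 2 * W ^ 2 - zK * rK ^ 2 * qK ^ 6 * U ^ 2 * W ^ 3 + zK * rK ^ 2 * qK ^ 6 * U ^ 3 * W - zK * rK ^ 2 * qK ^ 6 * U ^ 3 * W ^ 2 + 2 * zK * rK ^ 2 * qK ^ 8 * U * W ^ 2 - 2 * zK * rK ^ 2 * qK ^ 8 * U * W ^ 3 + 2 * zK * rK ^ 2 * qK ^ 8 * U ^ 2 * W - 4 * zK * rK ^ 2 * qK ^ 8 * U ^ 2 * W ^ 2 + 2 * zK * rK ^ 2 * qK ^ 8 * U ^ 2 * W ^ 3 - 2 * zK * rK ^ 2 * qK ^ 8 * U ^ 3 * W + 2 * zK * rK ^ 2 * qK ^ 8 * U ^ 3 * W ^ 2 - zK * rK ^ 2 * qK ^ 10 * U * W ^ 2 + zK * rK ^ 2 * qK ^ 10 * U * W ^ 3 - zK * rK ^ 2 * qK ^ 10 * U ^ 2 * W + 2 * zK * rK ^ 2 * qK ^ 10 * U ^ 2 * W ^ 2 - zK * rK ^ 2 * qK ^ 10 * U ^ 2 * W ^ 3 + zK * rK ^ 2 * qK ^ 10 * U ^ 3 * W - zK * rK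 ^ 2 * qK ^ 10 * U ^ 3 * W ^ 2 - zK ^ 2 * qK ^ 5 * U ^ 3 * W ^ 3 + zK ^ 2 * qK ^ 5 * U ^ 3 * W ^ 4 + zK ^ 2 * qK ^ 5 * U ^ 4 * W ^ 3 - zK ^ 2 * qK ^ 5 * U ^ 4 * W ^ 4 + zK ^ 2 * qK ^ 7 * U ^ 3 * W ^ 3 - zK ^ 2 * qK ^ 7 * U ^ 3 * W ^ 4 - zK ^ 2 * qK ^ 7 * U ^ 4 * W ^ 3 + zK ^ 2 * qK ^ 7 * U ^ 4 * W ^ 4 - zK ^ 2 * rK * qK ^ 6 * U ^ 2 * W ^ 2 + zK ^ 2 * rK * qK ^ 6 * U ^ 2 * W ^ 4 + zK ^ 2 * rK * qK ^ 6 * U ^ 3 * W ^ 3 - zK ^ 2 * rK * qK ^ 6 * U ^ 3 * W ^ 4 + zK ^ 2 * rK * qK ^ 6 * U ^ 4 * W ^ 2 - zK ^ 2 * rK * qK ^ 6 * U ^ 4 * W ^ 3 + zK ^ 2 * rK * qK ^ 8 * U ^ 2 * W ^ 2 - zK ^ 2 * rK * qK ^ 8 * U ^ 2 * W ^ 4 - zK ^ 2 * rK * qK ^ 8 * U ^ 3 * W ^ 3 + zK ^ 2 * rK * qK ^ 8 * U ^ 3 * W ^ 4 - zK ^ 2 * rK * qK ^ 8 * U ^ 4 * W ^ 2 + zK ^ 2 * rK * qK ^ 8 * U ^ 4 * W ^ 3 - zK ^ 2 * rK ^ 2 * qK ^ 7 * U * W ^ 2 + zK ^ 2 * rK ^ 2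 * qK ^ 7 * U * W ^ 3 - zK ^ 2 * rK ^ 2 * qK ^ 7 * U ^ 2 * W + zK ^ 2 * rK ^ 2 * qK ^ 7 * U ^ 2 * W ^ 2 + zK ^ 2 * rK ^ 2 * qK ^ 7 * U ^ 3 * W - zK ^ 2 * rK ^ 2 * qK ^ 7 * U ^ 3 * W ^ 3 + zK ^ 2 * rK ^ 2 * qK ^ 9 * U * W ^ 2 - zK ^ 2 * rK ^ 2 * qK ^ 9 * U * W ^ 3 + zK ^ 2 * rK ^ 2 * qK ^ 9 * U ^ 2 * W - zK ^ 2 * rK ^ 2 * qK ^ 9 * U ^ 2 * W ^ 2 - zK ^ 2 * rK ^ 2 * qK ^ 9 * U ^ 3 * W + zK ^ 2 * rK ^ 2 * qK ^ 9 * U ^ 3 * W ^ 3 - zK ^ 2 * rK ^ 3 * qK ^ 8 * U * W + zK ^ 2 * rK ^ 3 * qK ^ 8 * U * W ^ 2 + zK ^ 2 * rK ^ 3 * qK ^ 8 * U ^ 2 * W - zK ^ 2 * rK ^ 3 * qK ^ 8 * U ^ 2 * W ^ 2 + zK ^ 2 * rK ^ 3 * qK ^ 10 * U * W - zK ^ 2 * rK ^ 3 * qK ^ 10 * U * W ^ 2 - zK ^ 2 * rK ^ 3 * qK ^ 10 * U ^ 2 * W + zK ^ 2 * rK ^ 3 * qK ^ 10 * U ^ 2 * W ^ 2" and cC="rK * qK ^ 3 * U ^ 3 * W ^ 3 - rK * qK ^ 3 * U ^ 3 * W ^ 4 - rK * qK ^ 3 * U ^ 4 * W ^ 3 + rK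 * qK ^ 3 * U ^ 4 * W ^ 4 - 3 * rK * qK ^ 5 * U ^ 3 * W ^ 3 + 3 * rK * qK ^ 5 * U ^ 3 * W ^ 4 + 3 * rK * qK ^ 5 * U ^ 4 * W ^ 3 - 3 * rK * qK ^ 5 * U ^ 4 * W ^ 4 + 3 * rK * qK ^ 7 * U ^ 3 * W ^ 3 - 3 * rK * qK ^ 7 * U ^ 3 * W ^ 4 - 3 * rK * qK ^ 7 * U ^ 4 * W ^ 3 + 3 * rK * qK ^ 7 * U ^ 4 * W ^ 4 - rK * qK ^ 9 * U ^ 3 * W ^ 3 + rK * qK ^ 9 * U ^ 3 * W ^ 4 + rK * qK ^ 9 * U ^ 4 * W ^ 3 - rK * qK ^ 9 * U ^ 4 * W ^ 4 + rK ^ 2 * qK ^ 4 * U ^ 2 * W ^ 2 - rK ^ 2 * qK ^ 4 * U ^ 2 * W ^ 3 - rK ^ 2 * qK ^ 4 * U ^ 3 * W ^ 2 + rK ^ 2 * qK ^ 4 * U ^ 3 * W ^ 3 - 3 * rK ^ 2 * qK ^ 6 * U ^ 2 * W ^ 2 + 3 * rK ^ 2 * qK ^ 6 * U ^ 2 * W ^ 3 + 3 * rK ^ 2 * qK ^ 6 * U ^ 3 * W ^ 2 - 3 * rK ^ 2 * qK ^ 6 * U ^ 3 * W ^ 3 + 3 * rK ^ 2 * qK ^ 8 * U ^ 2 * W ^ 2 - 3 * rK ^ 2 * qK ^ 8 * U ^ 2 * W ^ 3 - 3 * rK ^ 2 * qK ^ 8 * U ^ 3 * W ^ 2 + 3 *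 rK ^ 2 * qK ^ 8 * U ^ 3 * W ^ 3 - rK ^ 2 * qK ^ 10 * U ^ 2 * W ^ 2 + rK ^ 2 * qK ^ 10 * U ^ 2 * W ^ 3 + rK ^ 2 * qK ^ 10 * U ^ 3 * W ^ 2 - rK ^ 2 * qK ^ 10 * U ^ 3 * W ^ 3"])
       apply (simp add: qK_nz rK_nz zK_nz)
      by algebra
    subgoal
      apply (rule cert[where M="1 * qK ^ 3 * rK ^ 1 * zK ^ 1" and cA="qK ^ 3 * U ^ 3 * W ^ 3 - qK ^ 3 * U ^ 3 * W ^ 4 - qK ^ 3 * U ^ 4 * W ^ 3 + qK ^ 3 * U ^ 4 * W ^ 4 - 2 * qK ^ 5 * U ^ 3 * W ^ 3 + 2 * qK ^ 5 * U ^ 3 * W ^ 4 + 2 * qK ^ 5 * U ^ 4 * W ^ 3 - 2 * qK ^ 5 * U ^ 4 * W ^ 4 + qK ^ 7 * U ^ 3 * W ^ 3 - qK ^ 7 * U ^ 3 * W ^ 4 - qK ^ 7 * U ^ 4 * W ^ 3 + qK ^ 7 * U ^ 4 * W ^ 4 + rK * qK ^ 4 * U ^ 2 * W ^ 2 - rK * qK ^ 4 * U ^ 2 * W ^ 3 - rK * qK ^ 4 * U ^ 3 * W ^ 2 + rK * qK ^ 4 * U ^ 3 * W ^ 3 - 2 * rK * qK ^ 6 * U ^ 2 * W ^ 2 + 2 * rK * qK ^ 6 * U ^ 2 * W ^ 3 + 2 * rK * qK ^ 6 * U ^ 3 * W ^ 2 - 2 * rK * qK ^ 6 * U ^ 3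 * W ^ 3 + rK * qK ^ 8 * U ^ 2 * W ^ 2 - rK * qK ^ 8 * U ^ 2 * W ^ 3 - rK * qK ^ 8 * U ^ 3 * W ^ 2 + rK * qK ^ 8 * U ^ 3 * W ^ 3 - rK ^ 2 * qK ^ 3 * U ^ 3 * W ^ 3 + rK ^ 2 * qK ^ 3 * U ^ 3 * W ^ 4 + rK ^ 2 * qK ^ 3 * U ^ 4 * W ^ 3 - rK ^ 2 * qK ^ 3 * U ^ 4 * W ^ 4 + 2 * rK ^ 2 * qK ^ 5 * U ^ 3 * W ^ 3 - 2 * rK ^ 2 * qK ^ 5 * U ^ 3 * W ^ 4 - 2 * rK ^ 2 * qK ^ 5 * U ^ 4 * W ^ 3 + 2 * rK ^ 2 * qK ^ 5 * U ^ 4 * W ^ 4 - rK ^ 2 * qK ^ 7 * U ^ 3 * W ^ 3 + rK ^ 2 * qK ^ 7 * U ^ 3 * W ^ 4 + rK ^ 2 * qK ^ 7 * U ^ 4 * W ^ 3 - rK ^ 2 * qK ^ 7 * U ^ 4 * W ^ 4 - rK ^ 3 * qK ^ 4 * U ^ 2 * W ^ 2 + rK ^ 3 * qK ^ 4 * U ^ 2 * W ^ 3 + rK ^ 3 * qK ^ 4 * U ^ 3 * W ^ 2 - rK ^ 3 * qK ^ 4 * U ^ 3 * W ^ 3 + 2 * rK ^ 3 * qK ^ 6 * U ^ 2 * W ^ 2 - 2 * rK ^ 3 * qK ^ 6 * U ^ 2 * W ^ 3 - 2 * rK ^ 3 * qK ^ 6 * U ^ 3 * W ^ 2 + 2 *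 rK ^ 3 * qK ^ 6 * U ^ 3 * W ^ 3 - rK ^ 3 * qK ^ 8 * U ^ 2 * W ^ 2 + rK ^ 3 * qK ^ 8 * U ^ 2 * W ^ 3 + rK ^ 3 * qK ^ 8 * U ^ 3 * W ^ 2 - rK ^ 3 * qK ^ 8 * U ^ 3 * W ^ 3 + zK * qK ^ 4 * U ^ 3 * W ^ 3 - zK * qK ^ 4 * U ^ 3 * W ^ 4 - zK * qK ^ 4 * U ^ 4 * W ^ 3 + zK * qK ^ 4 * U ^ 4 * W ^ 4 - zK * qK ^ 6 * U ^ 3 * W ^ 3 + zK * qK ^ 6 * U ^ 3 * W ^ 4 + zK * qK ^ 6 * U ^ 4 * W ^ 3 - zK * qK ^ 6 * U ^ 4 * W ^ 4 - zK * rK * qK ^ 3 * U ^ 2 * W ^ 2 + zK * rK * qK ^ 3 * U ^ 2 * W ^ 3 + zK * rK * qK ^ 3 * U ^ 3 * W ^ 2 - zK * rK * qK ^ 3 * U ^ 3 * W ^ 4 - zK * rK * qK ^ 3 * U ^ 4 * W ^ 3 + zK * rK * qK ^ 3 * U ^ 4 * W ^ 4 + 3 * zK * rK * qK ^ 5 * U ^ 2 * W ^ 2 - 2 * zK * rK * qK ^ 5 * U ^ 2 * W ^ 3 - zK * rK * qK ^ 5 * U ^ 2 * W ^ 4 - 2 * zK * rK * qK ^ 5 * U ^ 3 * W ^ 2 - zK * rK * qK ^ 5 * U ^ 3 * W ^ 3 + 3 * zK * rK * qK ^ 5 * U ^ 3 * W ^ 4 - zK * rK * qK ^ 5 * U ^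 4 * W ^ 2 + 3 * zK * rK * qK ^ 5 * U ^ 4 * W ^ 3 - 2 * zK * rK * qK ^ 5 * U ^ 4 * W ^ 4 - 2 * zK * rK * qK ^ 7 * U ^ 2 * W ^ 2 + zK * rK * qK ^ 7 * U ^ 2 * W ^ 3 + zK * rK * qK ^ 7 * U ^ 2 * W ^ 4 + zK * rK * qK ^ 7 * U ^ 3 * W ^ 2 + zK * rK * qK ^ 7 * U ^ 3 * W ^ 3 - 2 * zK * rK * qK ^ 7 * U ^ 3 * W ^ 4 + zK * rK * qK ^ 7 * U ^ 4 * W ^ 2 - 2 * zK * rK * qK ^ 7 * U ^ 4 * W ^ 3 + zK * rK * qK ^ 7 * U ^ 4 * W ^ 4 + zK * rK ^ 2 * qK ^ 6 * U * W ^ 2 - zK * rK ^ 2 * qK ^ 6 * U * W ^ 3 + zK * rK ^ 2 * qK ^ 6 * U ^ 2 * W - zK * rK ^ 2 * qK ^ 6 * U ^ 2 * W ^ 2 - zK * rK ^ 2 * qK ^ 6 * U ^ 3 * W + zK * rK ^ 2 * qK ^ 6 * U ^ 3 * W ^ 3 - zK * rK ^ 2 * qK ^ 8 * U * W ^ 2 + zK * rK ^ 2 * qK ^ 8 * U * W ^ 3 - zK * rK ^ 2 * qK ^ 8 * U ^ 2 * W + zK * rK ^ 2 * qK ^ 8 * U ^ 2 * W ^ 2 + zK * rK ^ 2 * qK ^ 8 * U ^ 3 * W - zK * rK ^ 2 * qK ^ 8 * U ^ 3 * W ^ 3 + zK * rK ^ 3 * qK ^ 5 * U * W - zK * rK ^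 3 * qK ^ 5 * U * W ^ 2 - zK * rK ^ 3 * qK ^ 5 * U ^ 2 * W + zK * rK ^ 3 * qK ^ 5 * U ^ 2 * W ^ 3 + zK * rK ^ 3 * qK ^ 5 * U ^ 3 * W ^ 2 - zK * rK ^ 3 * qK ^ 5 * U ^ 3 * W ^ 3 - zK * rK ^ 3 * qK ^ 7 * U * W + zK * rK ^ 3 * qK ^ 7 * U * W ^ 2 + zK * rK ^ 3 * qK ^ 7 * U ^ 2 * W + zK * rK ^ 3 * qK ^ 7 * U ^ 2 * W ^ 2 - 2 * zK * rK ^ 3 * qK ^ 7 * U ^ 2 * W ^ 3 - 2 * zK * rK ^ 3 * qK ^ 7 * U ^ 3 * W ^ 2 + 2 * zK * rK ^ 3 * qK ^ 7 * U ^ 3 * W ^ 3 - zK * rK ^ 3 * qK ^ 9 * U ^ 2 * W ^ 2 + zK * rK ^ 3 * qK ^ 9 * U ^ 2 * W ^ 3 + zK * rK ^ 3 * qK ^ 9 * U ^ 3 * W ^ 2 - zK * rK ^ 3 * qK ^ 9 * U ^ 3 * W ^ 3 - zK ^ 2 * rK * qK ^ 4 * U ^ 2 * W ^ 2 + zK ^ 2 * rK * qK ^ 4 * U ^ 2 * W ^ 3 + zK ^ 2 * rK * qK ^ 4 * U ^ 3 * W ^ 2 - zK ^ 2 * rK * qK ^ 4 * U ^ 3 * W ^ 4 - zK ^ 2 * rK * qK ^ 4 * U ^ 4 * W ^ 3 + zK ^ 2 * rK * qK ^ 4 * U ^ 4 * W ^ 4 + zK ^ 2 * rK * qK ^ 6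 * U ^ 2 * W ^ 2 - zK ^ 2 * rK * qK ^ 6 * U ^ 2 * W ^ 3 - zK ^ 2 * rK * qK ^ 6 * U ^ 3 * W ^ 2 + zK ^ 2 * rK * qK ^ 6 * U ^ 3 * W ^ 4 + zK ^ 2 * rK * qK ^ 6 * U ^ 4 * W ^ 3 - zK ^ 2 * rK * qK ^ 6 * U ^ 4 * W ^ 4 - zK ^ 2 * rK ^ 2 * qK ^ 5 * U * W ^ 2 + zK ^ 2 * rK ^ 2 * qK ^ 5 * U * W ^ 3 - zK ^ 2 * rK ^ 2 * qK ^ 5 * U ^ 2 * W + 2 * zK ^ 2 * rK ^ 2 * qK ^ 5 * U ^ 2 * W ^ 2 - zK ^ 2 * rK ^ 2 * qK ^ 5 * U ^ 2 * W ^ 4 + zK ^ 2 * rK ^ 2 * qK ^ 5 * U ^ 3 * W - 2 * zK ^ 2 * rK ^ 2 * qK ^ 5 * U ^ 3 * W ^ 3 + zK ^ 2 * rK ^ 2 * qK ^ 5 * U ^ 3 * W ^ 4 - zK ^ 2 * rK ^ 2 * qK ^ 5 * U ^ 4 * W ^ 2 + zK ^ 2 * rK ^ 2 * qK ^ 5 * U ^ 4 * W ^ 3 + zK ^ 2 * rK ^ 2 * qK ^ 7 * U * W ^ 2 - zK ^ 2 * rK ^ 2 * qK ^ 7 * U * W ^ 3 + zK ^ 2 * rK ^ 2 * qK ^ 7 * U ^ 2 * W - 2 * zK ^ 2 * rK ^ 2 * qK ^ 7 * U ^ 2 * W ^ 2 + zK ^ 2 * rK ^ 2 * qK ^ 7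 * U ^ 2 * W ^ 4 - zK ^ 2 * rK ^ 2 * qK ^ 7 * U ^ 3 * W + 2 * zK ^ 2 * rK ^ 2 * qK ^ 7 * U ^ 3 * W ^ 3 - zK ^ 2 * rK ^ 2 * qK ^ 7 * U ^ 3 * W ^ 4 + zK ^ 2 * rK ^ 2 * qK ^ 7 * U ^ 4 * W ^ 2 - zK ^ 2 * rK ^ 2 * qK ^ 7 * U ^ 4 * W ^ 3 - zK ^ 2 * rK ^ 3 * qK ^ 6 * U * W + zK ^ 2 * rK ^ 3 * qK ^ 6 * U * W ^ 2 + zK ^ 2 * rK ^ 3 * qK ^ 6 * U ^ 2 * W - zK ^ 2 * rK ^ 3 * qK ^ 6 * U ^ 2 * W ^ 3 - zK ^ 2 * rK ^ 3 * qK ^ 6 * U ^ 3 * W ^ 2 + zK ^ 2 * rK ^ 3 * qK ^ 6 * U ^ 3 * W ^ 3 + zK ^ 2 * rK ^ 3 * qK ^ 8 * U * W - zK ^ 2 * rK ^ 3 * qK ^ 8 * U * W ^ 2 - zK ^ 2 * rK ^ 3 * qK ^ 8 * U ^ 2 * W + zK ^ 2 * rK ^ 3 * qK ^ 8 * U ^ 2 * W ^ 3 + zK ^ 2 * rK ^ 3 * qK ^ 8 * U ^ 3 * W ^ 2 - zK ^ 2 * rK ^ 3 * qK ^ 8 * U ^ 3 * W ^ 3" and cB="qK ^ 3 * U ^ 3 * W ^ 3 - qK ^ 3 * U ^ 3 * W ^ 4 - qK ^ 3 * U ^ 4 * W ^ 3 + qK ^ 3 * U ^ 4 * W ^ 4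 - 3 * qK ^ 5 * U ^ 3 * W ^ 3 + 3 * qK ^ 5 * U ^ 3 * W ^ 4 + 3 * qK ^ 5 * U ^ 4 * W ^ 3 - 3 * qK ^ 5 * U ^ 4 * W ^ 4 + 3 * qK ^ 7 * U ^ 3 * W ^ 3 - 3 * qK ^ 7 * U ^ 3 * W ^ 4 - 3 * qK ^ 7 * U ^ 4 * W ^ 3 + 3 * qK ^ 7 * U ^ 4 * W ^ 4 - qK ^ 9 * U ^ 3 * W ^ 3 + qK ^ 9 * U ^ 3 * W ^ 4 + qK ^ 9 * U ^ 4 * W ^ 3 - qK ^ 9 * U ^ 4 * W ^ 4 + rK * qK ^ 4 * U ^ 2 * W ^ 2 - rK * qK ^ 4 * U ^ 2 * W ^ 3 - rK * qK ^ 4 * U ^ 3 * W ^ 2 + rK * qK ^ 4 * U ^ 3 * W ^ 3 - 3 * rK * qK ^ 6 * U ^ 2 * W ^ 2 + 3 * rK * qK ^ 6 * U ^ 2 * W ^ 3 + 3 * rK * qK ^ 6 * U ^ 3 * W ^ 2 - 3 * rK * qK ^ 6 * U ^ 3 * W ^ 3 + 3 * rK * qK ^ 8 * U ^ 2 * W ^ 2 - 3 * rK * qK ^ 8 * U ^ 2 * W ^ 3 - 3 * rK * qK ^ 8 * U ^ 3 * W ^ 2 + 3 * rK * qK ^ 8 * U ^ 3 * W ^ 3 - rK * qK ^ 10 * U ^ 2 * W ^ 2 + rK * qK ^ 10 * U ^ 2 * W ^ 3 + rK * qK ^ 10 * U ^ 3 * W ^ 2 - rK * qK ^ 10 * U ^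 3 * W ^ 3 + 2 * zK * qK ^ 4 * U ^ 3 * W ^ 3 - 2 * zK * qK ^ 4 * U ^ 3 * W ^ 4 - 2 * zK * qK ^ 4 * U ^ 4 * W ^ 3 + 2 * zK * qK ^ 4 * U ^ 4 * W ^ 4 - 4 * zK * qK ^ 6 * U ^ 3 * W ^ 3 + 4 * zK * qK ^ 6 * U ^ 3 * W ^ 4 + 4 * zK * qK ^ 6 * U ^ 4 * W ^ 3 - 4 * zK * qK ^ 6 * U ^ 4 * W ^ 4 + 2 * zK * qK ^ 8 * U ^ 3 * W ^ 3 - 2 * zK * qK ^ 8 * U ^ 3 * W ^ 4 - 2 * zK * qK ^ 8 * U ^ 4 * W ^ 3 + 2 * zK * qK ^ 8 * U ^ 4 * W ^ 4 + 2 * zK * rK * qK ^ 5 * U ^ 2 * W ^ 2 - zK * rK * qK ^ 5 * U ^ 2 * W ^ 3 - zK * rK * qK ^ 5 * U ^ 2 * W ^ 4 - zK * rK * qK ^ 5 * U ^ 3 * W ^ 2 + zK * rK * qK ^ 5 * U ^ 3 * W ^ 4 - zK * rK * qK ^ 5 * U ^ 4 * W ^ 2 + zK * rK * qK ^ 5 * U ^ 4 * W ^ 3 - 4 * zK * rK * qK ^ 7 * U ^ 2 * W ^ 2 + 2 * zK * rK * qK ^ 7 * U ^ 2 * W ^ 3 + 2 * zK * rK * qK ^ 7 * U ^ 2 * W ^ 4 + 2 * zK * rK * qK ^ 7 * U ^ 3 * W ^ 2 - 2 * zK * rK * qK ^ 7 * U ^ 3 * W ^ 4 + 2 * zK * rK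 * qK ^ 7 * U ^ 4 * W ^ 2 - 2 * zK * rK * qK ^ 7 * U ^ 4 * W ^ 3 + 2 * zK * rK * qK ^ 9 * U ^ 2 * W ^ 2 - zK * rK * qK ^ 9 * U ^ 2 * W ^ 3 - zK * rK * qK ^ 9 * U ^ 2 * W ^ 4 - zK * rK * qK ^ 9 * U ^ 3 * W ^ 2 + zK * rK * qK ^ 9 * U ^ 3 * W ^ 4 - zK * rK * qK ^ 9 * U ^ 4 * W ^ 2 + zK * rK * qK ^ 9 * U ^ 4 * W ^ 3 + zK * rK ^ 2 * qK ^ 6 * U * W ^ 2 - zK * rK ^ 2 * qK ^ 6 * U * W ^ 3 + zK * rK ^ 2 * qK ^ 6 * U ^ 2 * W - 2 * zK * rK ^ 2 * qK ^ 6 * U ^ 2 * W ^ 2 + zK * rK ^ 2 * qK ^ 6 * U ^ 2 * W ^ 3 - zK * rK ^ 2 * qK ^ 6 * U ^ 3 * W + zK * rK ^ 2 * qK ^ 6 * U ^ 3 * W ^ 2 - 2 * zK * rK ^ 2 * qK ^ 8 * U * W ^ 2 + 2 * zK * rK ^ 2 * qK ^ 8 * U * W ^ 3 - 2 * zK * rK ^ 2 * qK ^ 8 * U ^ 2 * W + 4 * zK * rK ^ 2 * qK ^ 8 * U ^ 2 * W ^ 2 - 2 * zK * rK ^ 2 * qK ^ 8 * U ^ 2 * W ^ 3 + 2 * zK * rK ^ 2 * qK ^ 8 * U ^ 3 * W - 2 * zK * rK ^ 2 * qK ^ 8 * U ^ 3 * W ^ 2 + zK * rK ^ 2 * qK ^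 10 * U * W ^ 2 - zK * rK ^ 2 * qK ^ 10 * U * W ^ 3 + zK * rK ^ 2 * qK ^ 10 * U ^ 2 * W - 2 * zK * rK ^ 2 * qK ^ 10 * U ^ 2 * W ^ 2 + zK * rK ^ 2 * qK ^ 10 * U ^ 2 * W ^ 3 - zK * rK ^ 2 * qK ^ 10 * U ^ 3 * W + zK * rK ^ 2 * qK ^ 10 * U ^ 3 * W ^ 2 + zK ^ 2 * qK ^ 5 * U ^ 3 * W ^ 3 - zK ^ 2 * qK ^ 5 * U ^ 3 * W ^ 4 - zK ^ 2 * qK ^ 5 * U ^ 4 * W ^ 3 + zK ^ 2 * qK ^ 5 * U ^ 4 * W ^ 4 - zK ^ 2 * qK ^ 7 * U ^ 3 * W ^ 3 + zK ^ 2 * qK ^ 7 * U ^ 3 * W ^ 4 + zK ^ 2 * qK ^ 7 * U ^ 4 * W ^ 3 - zK ^ 2 * qK ^ 7 * U ^ 4 * W ^ 4 + zK ^ 2 * rK * qK ^ 6 * U ^ 2 * W ^ 2 - zK ^ 2 * rK * qK ^ 6 * U ^ 2 * W ^ 4 - zK ^ 2 * rK * qK ^ 6 * U ^ 3 * W ^ 3 + zK ^ 2 * rK * qK ^ 6 * U ^ 3 * W ^ 4 - zK ^ 2 * rK * qK ^ 6 * U ^ 4 * W ^ 2 + zK ^ 2 * rK * qK ^ 6 * U ^ 4 * W ^ 3 - zK ^ 2 * rK * qK ^ 8 * U ^ 2 * W ^ 2 + zK ^ 2 * rK * qK ^ 8 * U ^ 2 * W ^ 4 + zK ^ 2 * rK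 * qK ^ 8 * U ^ 3 * W ^ 3 - zK ^ 2 * rK * qK ^ 8 * U ^ 3 * W ^ 4 + zK ^ 2 * rK * qK ^ 8 * U ^ 4 * W ^ 2 - zK ^ 2 * rK * qK ^ 8 * U ^ 4 * W ^ 3 + zK ^ 2 * rK ^ 2 * qK ^ 7 * U * W ^ 2 - zK ^ 2 * rK ^ 2 * qK ^ 7 * U * W ^ 3 + zK ^ 2 * rK ^ 2 * qK ^ 7 * U ^ 2 * W - zK ^ 2 * rK ^ 2 * qK ^ 7 * U ^ 2 * W ^ 2 - zK ^ 2 * rK ^ 2 * qK ^ 7 * U ^ 3 * W + zK ^ 2 * rK ^ 2 * qK ^ 7 * U ^ 3 * W ^ 3 - zK ^ 2 * rK ^ 2 * qK ^ 9 * U * W ^ 2 + zK ^ 2 * rK ^ 2 * qK ^ 9 * U * W ^ 3 - zK ^ 2 * rK ^ 2 * qK ^ 9 * U ^ 2 * W + zK ^ 2 * rK ^ 2 * qK ^ 9 * U ^ 2 * W ^ 2 + zK ^ 2 * rK ^ 2 * qK ^ 9 * U ^ 3 * W - zK ^ 2 * rK ^ 2 * qK ^ 9 * U ^ 3 * W ^ 3 + zK ^ 2 * rK ^ 3 * qK ^ 8 * U * W - zK ^ 2 * rK ^ 3 * qK ^ 8 * U * W ^ 2 - zK ^ 2 * rK ^ 3 * qK ^ 8 * U ^ 2 * W + zK ^ 2 * rK ^ 3 * qK ^ 8 * U ^ 2 * W ^ 2 - zK ^ 2 * rK ^ 3 * qK ^ 10 * U * W + zK ^ 2 * rK ^ 3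 * qK ^ 10 * U * W ^ 2 + zK ^ 2 * rK ^ 3 * qK ^ 10 * U ^ 2 * W - zK ^ 2 * rK ^ 3 * qK ^ 10 * U ^ 2 * W ^ 2" and cC="- (rK * qK ^ 3 * U ^ 3 * W ^ 3) + rK * qK ^ 3 * U ^ 3 * W ^ 4 + rK * qK ^ 3 * U ^ 4 * W ^ 3 - rK * qK ^ 3 * U ^ 4 * W ^ 4 + 3 * rK * qK ^ 5 * U ^ 3 * W ^ 3 - 3 * rK * qK ^ 5 * U ^ 3 * W ^ 4 - 3 * rK * qK ^ 5 * U ^ 4 * W ^ 3 + 3 * rK * qK ^ 5 * U ^ 4 * W ^ 4 - 3 * rK * qK ^ 7 * U ^ 3 * W ^ 3 + 3 * rK * qK ^ 7 * U ^ 3 * W ^ 4 + 3 * rK * qK ^ 7 * U ^ 4 * W ^ 3 - 3 * rK * qK ^ 7 * U ^ 4 * W ^ 4 + rK * qK ^ 9 * U ^ 3 * W ^ 3 - rK * qK ^ 9 * U ^ 3 * W ^ 4 - rK * qK ^ 9 * U ^ 4 * W ^ 3 + rK * qK ^ 9 * U ^ 4 * W ^ 4 - rK ^ 2 * qK ^ 4 * U ^ 2 * W ^ 2 + rK ^ 2 * qK ^ 4 * U ^ 2 * W ^ 3 + rK ^ 2 * qK ^ 4 * U ^ 3 * W ^ 2 - rK ^ 2 * qK ^ 4 * U ^ 3 * W ^ 3 + 3 * rK ^ 2 * qK ^ 6 * U ^ 2 * W ^ 2 - 3 * rK ^ 2 * qK ^ 6 * U ^ 2 * W ^ 3 - 3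 * rK ^ 2 * qK ^ 6 * U ^ 3 * W ^ 2 + 3 * rK ^ 2 * qK ^ 6 * U ^ 3 * W ^ 3 - 3 * rK ^ 2 * qK ^ 8 * U ^ 2 * W ^ 2 + 3 * rK ^ 2 * qK ^ 8 * U ^ 2 * W ^ 3 + 3 * rK ^ 2 * qK ^ 8 * U ^ 3 * W ^ 2 - 3 * rK ^ 2 * qK ^ 8 * U ^ 3 * W ^ 3 + rK ^ 2 * qK ^ 10 * U ^ 2 * W ^ 2 - rK ^ 2 * qK ^ 10 * U ^ 2 * W ^ 3 - rK ^ 2 * qK ^ 10 * U ^ 3 * W ^ 2 + rK ^ 2 * qK ^ 10 * U ^ 3 * W ^ 3"])
       apply (simp add: qK_nz rK_nz zK_nz)
      by algebra
    subgoal by algebra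
    subgoal
      apply (rule cert[where M="1 * qK ^ 1" and cA="qK ^ 2 * U ^ 2 * W ^ 2 - qK ^ 2 * U ^ 2 * W ^ 3 - qK ^ 2 * U ^ 3 * W ^ 2 + qK ^ 2 * U ^ 3 * W ^ 4 + qK ^ 2 * U ^ 4 * W ^ 3 - qK ^ 2 * U ^ 4 * W ^ 4 - qK ^ 4 * U ^ 2 * W ^ 2 + qK ^ 4 * U ^ 2 * W ^ 3 + qK ^ 4 * U ^ 3 * W ^ 2 - qK ^ 4 * U ^ 3 * W ^ 4 - qK ^ 4 * U ^ 4 * W ^ 3 + qK ^ 4 * U ^ 4 * W ^ 4 + rK * qK ^ 3 * U * W ^ 2 - rK * qK ^ 3 * U * W ^ 3 + rK * qK ^ 3 * U ^ 2 * W - 2 * rK * qK ^ 3 * U ^ 2 * W ^ 2 + rK * qK ^ 3 * U ^ 2 * W ^ 4 - rK * qK ^ 3 * U ^ 3 * W + 2 * rK * qK ^ 3 * U ^ 3 * W ^ 3 - rK * qK ^ 3 * U ^ 3 * W ^ 4 + rK * qK ^ 3 * U ^ 4 * W ^ 2 - rK * qK ^ 3 * U ^ 4 * W ^ 3 - rK * qK ^ 5 * U * W ^ 2 + rK * qK ^ 5 * U * W ^ 3 - rK * qK ^ 5 * U ^ 2 * W + 2 * rK * qK ^ 5 * U ^ 2 * W ^ 2 - rK * qK ^ 5 * U ^ 2 * W ^ 4 + rK * qK ^ 5 * U ^ 3 * W - 2 * rK * qK ^ 5 * U ^ 3 * W ^ 3 + rK * qK ^ 5 * U ^ 3 * W ^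 4 - rK * qK ^ 5 * U ^ 4 * W ^ 2 + rK * qK ^ 5 * U ^ 4 * W ^ 3 + rK ^ 2 * qK ^ 4 * U * W - rK ^ 2 * qK ^ 4 * U * W ^ 2 - rK ^ 2 * qK ^ 4 * U ^ 2 * W + rK ^ 2 * qK ^ 4 * U ^ 2 * W ^ 3 + rK ^ 2 * qK ^ 4 * U ^ 3 * W ^ 2 - rK ^ 2 * qK ^ 4 * U ^ 3 * W ^ 3 - rK ^ 2 * qK ^ 6 * U * W + rK ^ 2 * qK ^ 6 * U * W ^ 2 + rK ^ 2 * qK ^ 6 * U ^ 2 * W - rK ^ 2 * qK ^ 6 * U ^ 2 * W ^ 3 - rK ^ 2 * qK ^ 6 * U ^ 3 * W ^ 2 + rK ^ 2 * qK ^ 6 * U ^ 3 * W ^ 3" and cB="0" and cC="0"])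
       apply (simp add: qK_nz rK_nz zK_nz)
      by algebra
    subgoal by algebra
    subgoal
      apply (rule cert[where M="1 * qK ^ 1" and cA="- (qK ^ 2 * U ^ 2 * W ^ 2) + qK ^ 2 * U ^ 2 * W ^ 3 + qK ^ 2 * U ^ 3 * W ^ 2 - qK ^ 2 * U ^ 3 * W ^ 4 - qK ^ 2 * U ^ 4 * W ^ 3 + qK ^ 2 * U ^ 4 * W ^ 4 + qK ^ 4 * U ^ 2 * W ^ 2 - qK ^ 4 * U ^ 2 * W ^ 3 - qK ^ 4 * U ^ 3 * W ^ 2 + qK ^ 4 * U ^ 3 * W ^ 4 + qK ^ 4 * U ^ 4 * W ^ 3 - qK ^ 4 * U ^ 4 * W ^ 4 - rK * qK ^ 3 * U * W ^ 2 + rK * qK ^ 3 * U * W ^ 3 - rK * qK ^ 3 * U ^ 2 * W + 2 * rK * qK ^ 3 * U ^ 2 * W ^ 2 - rK * qK ^ 3 * U ^ 2 * W ^ 4 + rK * qK ^ 3 * U ^ 3 * W - 2 * rK * qK ^ 3 * U ^ 3 * W ^ 3 + rK * qK ^ 3 * U ^ 3 * W ^ 4 - rK * qK ^ 3 * U ^ 4 * W ^ 2 + rK * qK ^ 3 * U ^ 4 * W ^ 3 + rK * qK ^ 5 * U * W ^ 2 - rK * qK ^ 5 * U * W ^ 3 + rK * qK ^ 5 * U ^ 2 * W - 2 * rK * qK ^ 5 * U ^ 2 * W ^ 2 + rK * qK ^ 5 * U ^ 2 * W ^ 4 - rK * qK ^ 5 * U ^ 3 * W + 2 * rK * qK ^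 5 * U ^ 3 * W ^ 3 - rK * qK ^ 5 * U ^ 3 * W ^ 4 + rK * qK ^ 5 * U ^ 4 * W ^ 2 - rK * qK ^ 5 * U ^ 4 * W ^ 3 - rK ^ 2 * qK ^ 4 * U * W + rK ^ 2 * qK ^ 4 * U * W ^ 2 + rK ^ 2 * qK ^ 4 * U ^ 2 * W - rK ^ 2 * qK ^ 4 * U ^ 2 * W ^ 3 - rK ^ 2 * qK ^ 4 * U ^ 3 * W ^ 2 + rK ^ 2 * qK ^ 4 * U ^ 3 * W ^ 3 + rK ^ 2 * qK ^ 6 * U * W - rK ^ 2 * qK ^ 6 * U * W ^ 2 - rK ^ 2 * qK ^ 6 * U ^ 2 * W + rK ^ 2 * qK ^ 6 * U ^ 2 * W ^ 3 + rK ^ 2 * qK ^ 6 * U ^ 3 * W ^ 2 - rK ^ 2 * qK ^ 6 * U ^ 3 * W ^ 3" and cB="0" and cC="0"])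
       apply (simp add: qK_nz rK_nz zK_nz)
      by algebra
    subgoal
      apply (rule cert[where M="1 * qK ^ 1" and cA="- (qK ^ 2 * U ^ 2 * W ^ 2) + qK ^ 2 * U ^ 2 * W ^ 3 + qK ^ 2 * U ^ 3 * W ^ 2 - qK ^ 2 * U ^ 3 * W ^ 4 - qK ^ 2 * U ^ 4 * W ^ 3 + qK ^ 2 * U ^ 4 * W ^ 4 + qK ^ 4 * U ^ 2 * W ^ 2 - qK ^ 4 * U ^ 2 * W ^ 3 - qK ^ 4 * U ^ 3 * W ^ 2 + qK ^ 4 * U ^ 3 * W ^ 4 + qK ^ 4 * U ^ 4 * W ^ 3 - qK ^ 4 * U ^ 4 * W ^ 4 - rK * qK ^ 3 * U * W ^ 2 + rK * qK ^ 3 * U * W ^ 3 - rK * qK ^ 3 * U ^ 2 * W + 2 * rK * qK ^ 3 * U ^ 2 * W ^ 2 - rK * qK ^ 3 * U ^ 2 * W ^ 4 + rK * qK ^ 3 * U ^ 3 * W - 2 * rK * qK ^ 3 * U ^ 3 * W ^ 3 + rK * qK ^ 3 * U ^ 3 * W ^ 4 - rK * qK ^ 3 * U ^ 4 * W ^ 2 + rK * qK ^ 3 * U ^ 4 * W ^ 3 + rK * qK ^ 5 * U * W ^ 2 - rK * qK ^ 5 * U * W ^ 3 + rK * qK ^ 5 * U ^ 2 * W - 2 * rK * qK ^ 5 * U ^ 2 * W ^ 2 + rK * qK ^ 5 * U ^ 2 * W ^ 4 - rK * qK ^ 5 * U ^ 3 * W + 2 * rK * qK ^ 5 * U ^ 3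 * W ^ 3 - rK * qK ^ 5 * U ^ 3 * W ^ 4 + rK * qK ^ 5 * U ^ 4 * W ^ 2 - rK * qK ^ 5 * U ^ 4 * W ^ 3 - rK ^ 2 * qK ^ 4 * U * W + rK ^ 2 * qK ^ 4 * U * W ^ 2 + rK ^ 2 * qK ^ 4 * U ^ 2 * W - rK ^ 2 * qK ^ 4 * U ^ 2 * W ^ 3 - rK ^ 2 * qK ^ 4 * U ^ 3 * W ^ 2 + rK ^ 2 * qK ^ 4 * U ^ 3 * W ^ 3 + rK ^ 2 * qK ^ 6 * U * W - rK ^ 2 * qK ^ 6 * U * W ^ 2 - rK ^ 2 * qK ^ 6 * U ^ 2 * W + rK ^ 2 * qK ^ 6 * U ^ 2 * W ^ 3 + rK ^ 2 * qK ^ 6 * U ^ 3 * W ^ 2 - rK ^ 2 * qK ^ 6 * U ^ 3 * W ^ 3" and cB="0" and cC="0"])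
       apply (simp add: qK_nz rK_nz zK_nz)
      by algebra
    subgoal by algebra
    subgoal
      apply (rule cert[where M="1 * qK ^ 1" and cA="qK ^ 2 * U ^ 2 * W ^ 2 - qK ^ 2 * U ^ 2 * W ^ 3 - qK ^ 2 * U ^ 3 * W ^ 2 + qK ^ 2 * U ^ 3 * W ^ 4 + qK ^ 2 * U ^ 4 * W ^ 3 - qK ^ 2 * U ^ 4 * W ^ 4 - qK ^ 4 * U ^ 2 * W ^ 2 + qK ^ 4 * U ^ 2 * W ^ 3 + qK ^ 4 * U ^ 3 * W ^ 2 - qK ^ 4 * U ^ 3 * W ^ 4 - qK ^ 4 * U ^ 4 * W ^ 3 + qK ^ 4 * U ^ 4 * W ^ 4 + rK * qK ^ 3 * U * W ^ 2 - rK * qK ^ 3 * U * W ^ 3 + rK * qK ^ 3 * U ^ 2 * W - 2 * rK * qK ^ 3 * U ^ 2 * W ^ 2 + rK * qK ^ 3 * U ^ 2 * W ^ 4 - rK * qK ^ 3 * U ^ 3 * W + 2 * rK * qK ^ 3 * U ^ 3 * W ^ 3 - rK * qK ^ 3 * U ^ 3 * W ^ 4 + rK * qK ^ 3 * U ^ 4 * W ^ 2 - rK * qK ^ 3 * U ^ 4 * W ^ 3 - rK * qK ^ 5 * U * W ^ 2 + rK * qK ^ 5 * U * W ^ 3 - rK * qK ^ 5 * U ^ 2 * W + 2 * rK * qK ^ 5 * U ^ 2 * W ^ 2 - rK * qK ^ 5 * U ^ 2 * W ^ 4 + rK * qK ^ 5 * U ^ 3 * W - 2 * rK * qK ^ 5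 * U ^ 3 * W ^ 3 + rK * qK ^ 5 * U ^ 3 * W ^ 4 - rK * qK ^ 5 * U ^ 4 * W ^ 2 + rK * qK ^ 5 * U ^ 4 * W ^ 3 + rK ^ 2 * qK ^ 4 * U * W - rK ^ 2 * qK ^ 4 * U * W ^ 2 - rK ^ 2 * qK ^ 4 * U ^ 2 * W + rK ^ 2 * qK ^ 4 * U ^ 2 * W ^ 3 + rK ^ 2 * qK ^ 4 * U ^ 3 * W ^ 2 - rK ^ 2 * qK ^ 4 * U ^ 3 * W ^ 3 - rK ^ 2 * qK ^ 6 * U * W + rK ^ 2 * qK ^ 6 * U * W ^ 2 + rK ^ 2 * qK ^ 6 * U ^ 2 * W - rK ^ 2 * qK ^ 6 * U ^ 2 * W ^ 3 - rK ^ 2 * qK ^ 6 * U ^ 3 * W ^ 2 + rK ^ 2 * qK ^ 6 * U ^ 3 * W ^ 3" and cB="0" and cC="0"])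
       apply (simp add: qK_nz rK_nz zK_nz)
      by algebra
    subgoal by algebra
    subgoal by algebra
    subgoal by algebra
    done
  ultimately show ?thesis by simp
qed
end

definition tK :: "nat \<Rightarrow> K" where
  "tK k = - 1 / (qK * qint (k+1) * zK * qK ^ k * (qK ^ (2*k) + rK * qK))"

lemma qint_nz: "qint (Suc j) \<noteq> 0"
proof
  assume "qint (Suc j) = 0"
  hence "qK ^ Suc j - inverse (qK ^ Suc j) = 0"
    using zK_nz by (simp add: qint_def zK_def[symmetric])
  hence "qK ^ Suc j * qK ^ Suc j = 1" using qK_nz by (simp add: field_simps)
  moreover have "qK ^ (2 * Suc j) = qK ^ Suc j * qK ^ Suc j" by (simp only: mult_2 power_add)
  ultimately have "qK ^ (2 * Suc j) = 1" by simp
  with qK_pow_ne1[of "2 * Suc j"] show False by simp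
qed

lemma coef_ok:
  fixes k :: nat
  shows "tK k * alphaK (qK^(2*k)) = - (- 1 / qint (k+1) * qK^k)"
    and "tK k * betaK (qK^(2*k)) = - 1 / qint (k+1) * qint k"
    and "tK k * gammaK (qK^(2*k)) = - 1 / qint (k+1) * ((qK ^ k - inverse (qK ^ k)) / (1 + rK * qK * inverse (qK ^ (2 * k))))"
proof -
  define Q where "Q = qK ^ k"
  define I where "I = qint (k+1)"
  define W where "W = Q * Q + rK * qK"
  define D where "D = qK * I * zK * Q * W"
  have U: "qK ^ (2*k) = Q * Q" by (simp add: Q_def mult_2 power_add)
  have Qnz: "Q \<noteq> 0" using qK_nz by (simp add: Q_def)
  have Wnz: "W \<noteq> 0" using U_rq_nz[of "2*k"] by (simp add: U W_def)
  have Inz: "I \<noteq> 0" using qint_nz[of k] by (simp add: I_def)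
  have Dnz: "D \<noteq> 0" using Qnz Wnz Inz zK_nz qK_nz by (simp add: D_def)
  have t: "tK k = - 1 / D" by (simp add: tK_def D_def I_def Q_def W_def U)
  have qk: "qint k = (Q - inverse Q) / zK" by (simp add: qint_def Q_def zK_def)
  have z2: "qK ^ 2 - 1 = zK * qK" using rels(1) by simp
  have cancel: "\<And>X. - 1 / D * (D * X) = - X" using Dnz by (simp add: field_simps)
  have a1: "alphaK (qK^(2*k)) = D * (- (Q / I))"
    unfolding alphaK_def U z2 D_def W_def[symmetric] using Inz by (simp add: field_simps)
  show "tK k * alphaK (qK^(2*k)) = - (- 1 / qint (k+1) * qK^k)"
    unfolding t a1 cancel by (simp add: I_def Q_def)
  have b1: "betaK (qK^(2*k)) = D * ((Q * Q - 1) / (I * zK * Q))"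
    unfolding betaK_def U D_def W_def[symmetric] using Inz Qnz zK_nz qK_nz by (simp add: field_simps)
  show "tK k * betaK (qK^(2*k)) = - 1 / qint (k+1) * qint k"
    unfolding t b1 cancel I_def[symmetric] qk using Inz Qnz zK_nz by (simp add: field_simps)
  have g1: "gammaK (qK^(2*k)) = D * (Q * (Q * Q - 1) / (I * W))"
    unfolding gammaK_def U z2 D_def using Inz Qnz Wnz zK_nz qK_nz by (simp add: field_simps)
  have w1: "1 + rK * qK * inverse (Q * Q) = W / (Q * Q)"
    unfolding W_def using Qnz by (simp add: field_simps)
  show "tK k * gammaK (qK^(2*k)) = - 1 / qint (k+1) * ((qK ^ k - inverse (qK ^ k)) / (1 + rK * qK * inverse (qK ^ (2 * k))))"
    unfolding t g1 cancel unfolding I_def[symmetric] Q_def[symmetric] U w1 using Inz Qnz Wnz by (simp add: field_simps)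
qed

context bmw3 begin
lemma Ya_scale:
  assumes "t * alphaK U = - (s * Q)" "t * betaK U = s * p" "t * gammaK U = s * c"
  shows "\<phi> s * (\<phi> p * a - \<phi> Q + \<phi> c * e) = \<phi> t * Ya U"
  unfolding Ya_def
  by (simp only: distrib_left right_diff_distrib sc_sc sc_sc2 assms sc_minus mult_minus_right diff_conv_add_uminus add.commute add.left_commute)
lemma Yb_scale:
  assumes "t * alphaK U = - (s * Q)" "t * betaK U = s * p" "t * gammaK U = s * c"
  shows "\<phi> s * (\<phi> p * b - \<phi> Q + \<phi> c * f) = \<phi> t * Yb U"
  unfolding Yb_def
  by (simp only: distrib_left right_diff_distrib sc_sc sc_sc2 assms sc_minus mult_minus_right diff_conv_add_uminus add.commute add.left_commute)
lemma scm: "(\<phi> s * X) * (\<phi> t * Y) = \<phi> (s * t) * (X * Y)"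
proof -
  have "(\<phi> s * X) * (\<phi> t * Y) = \<phi> s * ((X * \<phi> t) * Y)" by (simp only: mult.assoc)
  also have "\<dots> = \<phi> s * ((\<phi> t * X) * Y)" by (simp only: sc_central)
  also have "\<dots> = \<phi> (s * t) * (X * Y)" by (simp only: mult.assoc sc_sc)
  finally show ?thesis .
qed
lemma sc3: "(\<phi> s * X) * (\<phi> t * Y) * (\<phi> u * Z) = \<phi> (s * t * u) * (X * Y * Z)"
  by (simp only: scm)
end

lemma bmw3_from:
  assumes "K_algebra_map \<phi>" "bmw_rels n \<phi> T Ti E" "1 \<le> i" "i \<le> n - 2"
  shows "bmw3 \<phi> (T i) (Ti i) (T (i+1)) (Ti (i+1)) (E i) (E (i+1))"
proof -
  have i1: "1 \<le> i \<and> i \<le> n - 1" and i2: "1 \<le> i+1 \<and> i+1 \<le> n - 1" using assms(3,4) by auto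
  note R = assms(2)[unfolded bmw_rels_def]
  have A: "\<And>j. 1 \<le> j \<and> j \<le> n - 1 \<Longrightarrow> T j * Ti j = 1 \<and> Ti j * T j = 1
      \<and> T j - Ti j = \<phi> (qK - inverse qK) * (1 - E j)
      \<and> E j * E j = \<phi> xK * E j
      \<and> E j * T j = \<phi> (inverse rK) * E j
      \<and> T j * E j = \<phi> (inverse rK) * E j" using R by blast
  have B: "T i * T (i+1) * T i = T (i+1) * T i * T (i+1)
      \<and> E i * E (i+1) * E i = E i
      \<and> E (i+1) * E i * E (i+1) = E (i+1)
      \<and> T i * T (i+1) * E i = E (i+1) * E i
      \<and> T (i+1) * T i * E (i+1) = E i * E (i+1)
      \<and> E i * T (i+1) * E i = \<phi> rK * E i
      \<and> E (i+1) * T i * E (i+1) = \<phi> rK * E (i+1)" using R assms(3,4) by blast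
  show ?thesis
    unfolding bmw3_def zK_def lK_def
    using A[OF i1] A[OF i2] B assms(1) by simp
qed

definition comm :: "'a::ring_1 \<Rightarrow> 'a \<Rightarrow> bool" where "comm x y \<longleftrightarrow> x * y = y * x"

lemma commR_add: "comm x y \<Longrightarrow> comm x z \<Longrightarrow> comm x (y + z)" by (simp add: comm_def algebra_simps)
lemma commR_diff: "comm x y \<Longrightarrow> comm x z \<Longrightarrow> comm x (y - z)" by (simp add: comm_def algebra_simps)
lemma commR_mult: "comm x y \<Longrightarrow> comm x z \<Longrightarrow> comm x (y * z)"
  unfolding comm_def by (metis mult.assoc)
lemma commR_1: "comm x 1" by (simp add: comm_def)
lemma commL_add: "comm y x \<Longrightarrow> comm z x \<Longrightarrow> comm (y + z) x" by (simp add: comm_def algebra_simps)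
lemma commL_diff: "comm y x \<Longrightarrow> comm z x \<Longrightarrow> comm (y - z) x" by (simp add: comm_def algebra_simps)
lemma commL_mult: "comm y x \<Longrightarrow> comm z x \<Longrightarrow> comm (y * z) x"
  unfolding comm_def by (metis mult.assoc)
lemma commL_1: "comm 1 x" by (simp add: comm_def)
lemma comm_sym: "comm x y \<Longrightarrow> comm y x" by (simp add: comm_def)

lemma comm_sc: "K_algebra_map \<phi> \<Longrightarrow> comm x (\<phi> c)" "K_algebra_map \<phi> \<Longrightarrow> comm (\<phi> c) x"
  unfolding comm_def K_algebra_map_def by metis+

lemma comm_inv:
  assumes "A * Ai = 1" "Ai * A = 1" "comm A X" shows "comm Ai X"
proof -
  have "Ai * X = Ai * X * (A * Ai)" using assms(1) by simp
  also have "\<dots> = Ai * (X * A) * Ai" by (simp add: mult.assoc)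
  also have "\<dots> = Ai * (A * X) * Ai" using assms(3) by (simp add: comm_def)
  also have "\<dots> = (Ai * A) * X * Ai" by (simp add: mult.assoc)
  also have "\<dots> = X * Ai" using assms(2) by simp
  finally show ?thesis by (simp add: comm_def)
qed

lemma E_expr:
  fixes \<phi> :: "K \<Rightarrow> 'a::ring_1"
  assumes hom: "K_algebra_map \<phi>" and sk: "A - Ai = \<phi> zK * (1 - EA)"
  shows "EA = 1 - \<phi> (inverse zK) * (A - Ai)"
proof -
  have m: "\<phi> (inverse zK) * \<phi> zK = \<phi> (inverse zK * zK)" and o: "\<phi> 1 = 1"
    using hom unfolding K_algebra_map_def by metis+
  have "\<phi> (inverse zK) * (A - Ai) = (\<phi> (inverse zK) * \<phi> zK) * (1 - EA)"
    by (simp only: sk mult.assoc)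
  also have "\<dots> = 1 - EA" using zK_nz by (simp only: m left_inverse[OF zK_nz] o mult_1_left)
  finally show ?thesis by simp
qed

lemma far_comm:
  fixes \<phi> :: "K \<Rightarrow> 'a::ring_1"
  assumes hom: "K_algebra_map \<phi>"
    and ia: "A * Ai = 1" "Ai * A = 1" and ib: "B * Bi = 1" "Bi * B = 1"
    and ska: "A - Ai = \<phi> zK * (1 - EA)" and skb: "B - Bi = \<phi> zK * (1 - EB)"
    and ab: "A * B = B * A"
  shows "comm A B" "comm A EB" "comm EA B" "comm EA EB"
proof -
  have cAB: "comm A B" using ab by (simp add: comm_def)
  have cAiB: "comm Ai B" by (rule comm_inv[OF ia cAB])
  have cABi: "comm A Bi" by (rule comm_sym, rule comm_inv[OF ib], rule comm_sym, rule cAB)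
  have cAiBi: "comm Ai Bi" by (rule comm_inv[OF ia cABi])
  note eA = E_expr[OF hom ska] and eB = E_expr[OF hom skb]
  show "comm A B" by (rule cAB)
  show cAEB: "comm A EB" unfolding eB
    by (intro commR_diff commR_1 commR_mult comm_sc(1)[OF hom] cAB cABi)
  show cEAB: "comm EA B" unfolding eA
    by (intro commL_diff commL_1 commL_mult comm_sc(2)[OF hom] cAB cAiB)
  have cAiEB: "comm Ai EB" unfolding eB
    by (intro commR_diff commR_1 commR_mult comm_sc(1)[OF hom] cAiB cAiBi)
  show "comm EA EB" unfolding eA
    by (intro commL_diff commL_1 commL_mult comm_sc(2)[OF hom] cAEB cAiEB)
qed

lemma bmwY_comm:
  fixes \<phi> :: "K \<Rightarrow> 'a::ring_1"
  assumes hom: "K_algebra_map \<phi>"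
    and c: "comm (T i) (T j)" "comm (T i) (E j)" "comm (E i) (T j)" "comm (E i) (E j)"
  shows "comm (bmwY \<phi> T E i k) (bmwY \<phi> T E j h)"
  unfolding bmwY_def
  by (intro commR_add commR_diff commR_mult comm_sc(1)[OF hom]
            commL_add commL_diff commL_mult comm_sc(2)[OF hom] c)

theorem proposition3p2:
  fixes n :: nat and \<phi> :: "K \<Rightarrow> 'a::ring_1" and T Ti E :: "nat \<Rightarrow> 'a"
  assumes "n \<ge> 3"
    and "K_algebra_map \<phi>"
    and "bmw_rels n \<phi> T Ti E"
  shows "(\<forall>k h i. 1 \<le> i \<and> i \<le> n - 2 \<longrightarrow>
            bmwY \<phi> T E i k * bmwY \<phi> T E (i+1) (k+h) * bmwY \<phi> T E i h
          = bmwY \<phi> T E (i+1) h * bmwY \<phi> T E i (k+h) * bmwY \<phi> T E (i+1) k)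
       \<and> (\<forall>k h i j. 1 \<le> i \<and> i \<le> n - 1 \<and> 1 \<le> j \<and> j \<le> n - 1 \<and> (i + 1 < j \<or> j + 1 < i) \<longrightarrow>
            bmwY \<phi> T E i k * bmwY \<phi> T E j h = bmwY \<phi> T E j h * bmwY \<phi> T E i k)"
proof (intro conjI allI impI)
  fix k h i :: nat
  assume hi: "1 \<le> i \<and> i \<le> n - 2"
  interpret B: bmw3 \<phi> "T i" "Ti i" "T (i+1)" "Ti (i+1)" "E i" "E (i+1)"
    using bmw3_from[OF assms(2) assms(3)] hi by auto
  have Y1: "bmwY \<phi> T E i m = \<phi> (tK m) * B.Ya (qK^(2*m))" for m
    unfolding bmwY_def by (rule B.Ya_scale) (rule coef_ok)+
  have Y2: "bmwY \<phi> T E (i+1) m = \<phi> (tK m) * B.Yb (qK^(2*m))" for m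
    unfolding bmwY_def by (rule B.Yb_scale) (rule coef_ok)+
  have U: "qK^(2*(k+h)) = qK^(2*k) * qK^(2*h)" by (simp add: power_add distrib_left)
  have core: "B.Ya (qK^(2*k)) * B.Yb (qK^(2*k) * qK^(2*h)) * B.Ya (qK^(2*h))
      = B.Yb (qK^(2*h)) * B.Ya (qK^(2*k) * qK^(2*h)) * B.Yb (qK^(2*k))"
    by (rule B.ybe_core)
  have sc: "tK k * tK (k+h) * tK h = tK h * tK (k+h) * tK k" by (simp only: mult_ac)
  show "bmwY \<phi> T E i k * bmwY \<phi> T E (i+1) (k+h) * bmwY \<phi> T E i h
          = bmwY \<phi> T E (i+1) h * bmwY \<phi> T E i (k+h) * bmwY \<phi> T E (i+1) k"
    unfolding Y1 Y2 U B.sc3 core sc ..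
next
  fix k h i j :: nat
  assume hij: "1 \<le> i \<and> i \<le> n - 1 \<and> 1 \<le> j \<and> j \<le> n - 1 \<and> (i + 1 < j \<or> j + 1 < i)"
  note R = assms(3)[unfolded bmw_rels_def]
  have Ai: "T i * Ti i = 1 \<and> Ti i * T i = 1 \<and> T i - Ti i = \<phi> (qK - inverse qK) * (1 - E i)"
    using R hij by blast
  have Aj: "T j * Ti j = 1 \<and> Ti j * T j = 1 \<and> T j - Ti j = \<phi> (qK - inverse qK) * (1 - E j)"
    using R hij by blast
  have ij: "T i * T j = T j * T i" using R hij by blast
  note fc = far_comm[OF assms(2), of "T i" "Ti i" "T j" "Ti j" "E i" "E j"]
  have "comm (bmwY \<phi> T E i k) (bmwY \<phi> T E j h)"
    by (rule bmwY_comm[OF assms(2)]) (use fc Ai Aj ij in \<open>simp_all add: zK_def\<close>)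
  thus "bmwY \<phi> T E i k * bmwY \<phi> T E j h = bmwY \<phi> T E j h * bmwY \<phi> T E i k"
    by (simp add: comm_def)
qed

end
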